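(* Let $G\in\mathfrak{M}$, $\phi=\phi_G$, $\operatorname{Arg}=\operatorname{Arg}_G$ and $E=E^G$. Then $$\operatorname{dom}\nabla\phi\setminus\operatorname{udom}\operatorname{Arg}\subset\partial\operatorname{dom}\phi\cap G=\partial\operatorname{dom}\phi\cap E.$$ Conversely, the set $\operatorname{udom}\operatorname{Arg}\setminus\operatorname{dom}\nabla\phi$ has at most two points, and these points belong to different linear (horizontal or vertical) parts of $\partial\operatorname{dom}\phi$. If $y\in\operatorname{dom}\nabla\phi\cap\operatorname{udom}\operatorname{Arg}$, then $D^c\phi(y)$ is the only element of $\operatorname{Arg}(y)$ and $$\phi(y)=c(D^c\phi(y),y)=\frac{\partial\phi}{\partial y_1}(y)\,\frac{\partial\phi}{\partial y_2}(y).$$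
   Context: $c(x,y)=(x_1-y_1)(x_2-y_2)$ for $x,y\in\mathbb{R}^2$. A set $G\subset\mathbb{R}^2$ is monotone if $c(r,s)\ge0$ for $r,s\in G$, maximal monotone if not a proper subset of a monotone set; $\mathfrak{M}$ is the family of maximal monotone sets. $\phi_G(y)=\inf_{x\in G}c(x,y)\in[-\infty,0]$. $\operatorname{dom}\phi=\{\phi>-\infty\}$ (a convex set); $\partial A$ denotes the relative boundary (closure minus relative interior) of a convex set $A$; $\partial\operatorname{dom}\phi$ is contained in the union of at most two lines, each horizontal or vertical, and its "linear parts" are its horizontal and vertical pieces. For $y$ in the interior of $\operatorname{dom}\phi$, $\nabla\phi(y)$ is the classical gradient when it exists; for $y\in\partial\operatorname{dom}\phi$, $\nabla\phi(y)$ exists if $\nabla\phi(y^n)$ converges to a common limit for every sequence $y^n\to y$ of interior points of $\operatorname{dom}\phi$ at which $\phi$ is differentiable. $\operatorname{dom}\nabla\phi=\{y\in\operatorname{dom}\phi:\nabla\phi(y)\text{ exists}\}$, and $D^c\phi(y)=\big(y_1-\frac{\partial\phi}{\partial y_2}(y),\,y_2-\frac{\partial\phi}{\partial y_1}(y)\big)$ for $y\in\operatorname{dom}\nabla\phi$. $\operatorname{Arg}_G(y)=\{x\in G:\phi_G(y)=c(x,y)\}$ and $\operatorname{udom}\operatorname{Arg}_G=\{y\in\mathbb{R}^2:\operatorname{Arg}_G(y)\text{ is a singleton}\}$. For $i=1,2$, $t\in\mathbb{R}$: $E^G_i(t)=\{x\in G:x_i=t\}$, $\mathcal{T}^G_i=\{t:E^G_i(t)\text{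 has more than one point}\}$, $E^G=\bigcup_{i=1,2}\bigcup_{t\in\mathcal{T}^G_i}E^G_i(t)$. *)

theory Defs
  imports "HOL-Analysis.Analysis"
begin

type_synonym pt = "real \<times> real"

definition cst :: "pt \<Rightarrow> pt \<Rightarrow> real" where
  "cst x y = (fst x - fst y) * (snd x - snd y)"

definition monotone_set :: "pt set \<Rightarrow> bool" where
  "monotone_set G \<longleftrightarrow> (\<forall>r\<in>G. \<forall>s\<in>G. cst r s \<ge> 0)"

definition maximal_monotone :: "pt set \<Rightarrow> bool" where
  "maximal_monotone G \<longleftrightarrow> monotone_set G \<and> (\<forall>H. monotone_set H \<and> G \<subseteq> H \<longrightarrow> H = G)"

definition phi :: "pt set \<Rightarrow> pt \<Rightarrow> ereal" where
  "phi G y = (INF x\<in>G. ereal (cst x y))"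

definition dom_phi :: "pt set \<Rightarrow> pt set" where
  "dom_phi G = {y. phi G y > -\<infinity>}"

text \<open>real-valued version of phi (meaningful on dom phi)\<close>
definition phir :: "pt set \<Rightarrow> pt \<Rightarrow> real" where
  "phir G y = real_of_ereal (phi G y)"

definition diff_pts :: "pt set \<Rightarrow> pt set" where
  "diff_pts G = {y \<in> interior (dom_phi G). \<exists>D. GDERIV (phir G) y :> D}"

definition cgrad :: "pt set \<Rightarrow> pt \<Rightarrow> pt" where
  "cgrad G y = (SOME D. GDERIV (phir G) y :> D)"

definition has_grad :: "pt set \<Rightarrow> pt \<Rightarrow> pt \<Rightarrow> bool" where
  "has_grad G y D \<longleftrightarrow>
     (y \<in> interior (dom_phi G) \<and> GDERIV (phir G) y :> D) \<or>
     (y \<in> rel_frontier (dom_phi G) \<and> y \<in> dom_phi G \<and>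
       (\<forall>ys::nat \<Rightarrow> pt. (\<forall>n. ys n \<in> diff_pts G) \<and> ys \<longlonglongrightarrow> y
            \<longrightarrow> (\<lambda>n. cgrad G (ys n)) \<longlonglongrightarrow> D))"

definition dom_grad :: "pt set \<Rightarrow> pt set" where
  "dom_grad G = {y \<in> dom_phi G. \<exists>D. has_grad G y D}"

definition grad :: "pt set \<Rightarrow> pt \<Rightarrow> pt" where
  "grad G y = (SOME D. has_grad G y D)"

definition Dc :: "pt set \<Rightarrow> pt \<Rightarrow> pt" where
  "Dc G y = (fst y - snd (grad G y), snd y - fst (grad G y))"

definition Arg :: "pt set \<Rightarrow> pt \<Rightarrow> pt set" where
  "Arg G y = {x \<in> G. phi G y = ereal (cst x y)}"

definition udom_Arg :: "pt set \<Rightarrow> pt set" where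
  "udom_Arg G = {y. \<exists>x. Arg G y = {x}}"

definition coord :: "nat \<Rightarrow> pt \<Rightarrow> real" where
  "coord i x = (if i = 1 then fst x else snd x)"

definition E_i :: "pt set \<Rightarrow> nat \<Rightarrow> real \<Rightarrow> pt set" where
  "E_i G i t = {x \<in> G. coord i x = t}"

definition T_i :: "pt set \<Rightarrow> nat \<Rightarrow> real set" where
  "T_i G i = {t. \<exists>a\<in>E_i G i t. \<exists>b\<in>E_i G i t. a \<noteq> b}"

definition E_set :: "pt set \<Rightarrow> pt set" where
  "E_set G = (\<Union>i\<in>{1,2}. \<Union>t\<in>T_i G i. E_i G i t)"

definition linear_parts :: "pt set \<Rightarrow> pt set set" where
  "linear_parts G = {P. \<exists>t. (P = {p. snd p = t} \<inter> rel_frontier (dom_phi G) \<or>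
                            P = {p. fst p = t} \<inter> rel_frontier (dom_phi G)) \<and> infinite P}"

end

theory Submission
  imports Defs "HOL-Analysis.Analysis"
begin

lemma cst_sym: "cst x y = cst y x"
  unfolding cst_def by (simp add: algebra_simps)

lemma cst_self[simp]: "cst x x = 0"
  unfolding cst_def by simp

lemma ereal_fin: "(- \<infinity> < (p::ereal)) \<Longrightarrow> p < \<infinity> \<Longrightarrow> p = ereal (real_of_ereal p)"
  by (cases p) auto

lemma abs_fst_le: "\<bar>fst x - fst y\<bar> \<le> dist x y"
  using dist_fst_le[of x y] by (simp add: dist_real_def)

lemma abs_snd_le: "\<bar>snd x - snd y\<bar> \<le> dist x y"
  using dist_snd_le[of x y] by (simp add: dist_real_def)

lemma norm_le_abs: "norm (x::pt) \<le> \<bar>fst x\<bar> + \<bar>snd x\<bar>"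
proof (cases x)
  case (Pair a b)
  have "sqrt (a\<^sup>2 + b\<^sup>2) \<le> sqrt ((\<bar>a\<bar> + \<bar>b\<bar>)\<^sup>2)"
    by (rule real_sqrt_le_mono) (simp add: power2_eq_square algebra_simps)
  then show ?thesis using Pair by (simp add: norm_Pair)
qed

lemma cst_lower_case: assumes "h > 0" "fst z - fst x \<ge> h" "snd z - snd x \<ge> h"
  shows "cst x z \<ge> h * (fst z - fst x)" "cst x z \<ge> h * (snd z - snd x)"
proof -
  have e: "cst x z = (fst z - fst x) * (snd z - snd x)" unfolding cst_def by (simp add: algebra_simps)
  show "cst x z \<ge> h * (fst z - fst x)" unfolding e
    using mult_right_mono[OF assms(3), of "fst z - fst x"] assms by (simp add: mult.commute)
  show "cst x z \<ge> h * (snd z - snd x)" unfolding e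
    using mult_right_mono[OF assms(2), of "snd z - snd x"] assms by (simp add: mult.commute)
qed

lemma cst_upper_case: assumes "h > 0" "fst x - fst z \<ge> h" "snd x - snd z \<ge> h"
  shows "cst x z \<ge> h * (fst x - fst z)" "cst x z \<ge> h * (snd x - snd z)"
proof -
  have e: "cst x z = (fst x - fst z) * (snd x - snd z)" unfolding cst_def by (simp add: algebra_simps)
  show "cst x z \<ge> h * (fst x - fst z)" unfolding e
    using mult_right_mono[OF assms(3), of "fst x - fst z"] assms by (simp add: mult.commute)
  show "cst x z \<ge> h * (snd x - snd z)" unfolding e
    using mult_right_mono[OF assms(2), of "snd x - snd z"] assms by (simp add: mult.commute)
qed

lemma cst_mid_case: assumes "\<bar>fst x - fst z\<bar> \<le> W" "\<bar>snd x - snd z\<bar> \<le> W"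
  shows "cst x z \<ge> - (W * W)"
proof -
  have "\<bar>cst x z\<bar> = \<bar>fst x - fst z\<bar> * \<bar>snd x - snd z\<bar>" unfolding cst_def by (simp add: abs_mult)
  also have "\<dots> \<le> W * W" using assms by (intro mult_mono) auto
  finally show ?thesis by linarith
qed

locale MM = fixes G :: "pt set" assumes mm: "maximal_monotone G"
begin

lemma monoG: "r \<in> G \<Longrightarrow> s \<in> G \<Longrightarrow> 0 \<le> cst r s"
  using mm unfolding maximal_monotone_def monotone_set_def by auto

lemma chain: "r \<in> G \<Longrightarrow> s \<in> G \<Longrightarrow> (fst r \<le> fst s \<and> snd r \<le> snd s) \<or> (fst s \<le> fst r \<and> snd s \<le> snd r)"
  using monoG[of r s] unfolding cst_def zero_le_mult_iff by auto

lemma addpt: assumes "\<forall>x\<in>G. 0 \<le> cst x p" shows "p \<in> G"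
proof -
  have "monotone_set (insert p G)"
    unfolding monotone_set_def using assms monoG cst_sym by (metis cst_self insert_iff order_refl)
  then have "insert p G = G" using mm unfolding maximal_monotone_def by blast
  then show ?thesis by blast
qed

lemma closedG: "closed G"
proof -
  have "closure G \<subseteq> G"
  proof
    fix p assume p: "p \<in> closure G"
    have "\<forall>x\<in>G. 0 \<le> cst x p"
    proof
      fix x assume x: "x \<in> G"
      have cl: "closed {p. 0 \<le> cst x p}" unfolding cst_def
        by (intro closed_Collect_le continuous_intros)
      have "G \<subseteq> {p. 0 \<le> cst x p}" using monoG[OF x] by blast
      then have "closure G \<subseteq> {p. 0 \<le> cst x p}" using cl closure_minimal by blast
      then show "0 \<le> cst x p" using p by auto
    qed
    then show "p \<in> G" by (rule addpt)
  qed
  then show ?thesis using closure_subset_eq by blast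
qed

lemma nonempty: "G \<noteq> {}"
  using addpt[of 0] by auto

lemma not_both_bdd_below: "\<not> (bdd_below (fst ` G) \<and> bdd_below (snd ` G))"
proof
  assume "bdd_below (fst ` G) \<and> bdd_below (snd ` G)"
  then obtain a b where a: "\<forall>x\<in>G. a \<le> fst x" and b: "\<forall>x\<in>G. b \<le> snd x"
    unfolding bdd_below_def by auto
  have "\<forall>x\<in>G. 0 \<le> cst x (a - 1, b - 1)"
    using a b unfolding cst_def by (auto intro!: mult_nonneg_nonneg)
  then have "(a - 1, b - 1) \<in> G" by (rule addpt)
  then show False using a by force
qed

lemma not_both_bdd_above: "\<not> (bdd_above (fst ` G) \<and> bdd_above (snd ` G))"
proof
  assume "bdd_above (fst ` G) \<and> bdd_above (snd ` G)"
  then obtain a b where a: "\<forall>x\<in>G. fst x \<le> a" and b: "\<forall>x\<in>G. snd x \<le> b"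
    unfolding bdd_above_def by auto
  have "\<forall>x\<in>G. 0 \<le> cst x (a + 1, b + 1)"
    using a b unfolding cst_def by (auto intro!: mult_nonpos_nonpos)
  then have "(a + 1, b + 1) \<in> G" by (rule addpt)
  then show False using a by force
qed

lemma chain_min: assumes "x \<in> G" "x' \<in> G"
  shows "\<exists>z\<in>G. fst z \<le> fst x \<and> snd z \<le> snd x \<and> fst z \<le> fst x' \<and> snd z \<le> snd x'"
  using chain[OF assms] assms by auto

lemma chain_max: assumes "x \<in> G" "x' \<in> G"
  shows "\<exists>z\<in>G. fst x \<le> fst z \<and> snd x \<le> snd z \<and> fst x' \<le> fst z \<and> snd x' \<le> snd z"
  using chain[OF assms] assms by auto

lemma phi_le: "x \<in> G \<Longrightarrow> phi G y \<le> ereal (cst x y)"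
  unfolding phi_def by (rule INF_lower)

lemma phi_less_top: "phi G y < \<infinity>"
proof -
  obtain x where "x \<in> G" using nonempty by auto
  then have "phi G y \<le> ereal (cst x y)" by (rule phi_le)
  moreover have "ereal (cst x y) < \<infinity>" by simp
  ultimately show ?thesis by (rule le_less_trans)
qed

lemma phi_eq: assumes "y \<in> dom_phi G" shows "phi G y = ereal (phir G y)"
proof -
  have a: "- \<infinity> < phi G y" using assms unfolding dom_phi_def by simp
  have b: "phi G y < \<infinity>" by (rule phi_less_top)
  show ?thesis unfolding phir_def by (rule ereal_fin[OF a b])
qed

lemma phir_le: "y \<in> dom_phi G \<Longrightarrow> x \<in> G \<Longrightarrow> phir G y \<le> cst x y"
  using phi_le[of x y] phi_eq[of y] by simp

lemma phir_approx: assumes "y \<in> dom_phi G" "e > 0" shows "\<exists>x\<in>G. cst x y < phir G y + e"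
proof -
  have "phi G y < ereal (phir G y + e)" using phi_eq[OF assms(1)] assms(2) by simp
  then show ?thesis unfolding phi_def INF_less_iff by auto
qed

lemma dom_I: assumes "\<forall>x\<in>G. L \<le> cst x y" shows "y \<in> dom_phi G" "L \<le> phir G y"
proof -
  have "ereal L \<le> phi G y" unfolding phi_def using assms by (auto intro!: INF_greatest)
  then show "y \<in> dom_phi G" unfolding dom_phi_def by (cases "phi G y") auto
  then show "L \<le> phir G y" using \<open>ereal L \<le> phi G y\<close> phi_eq[of y] by simp
qed

lemma Arg_iff: "x \<in> Arg G y \<longleftrightarrow> x \<in> G \<and> y \<in> dom_phi G \<and> phir G y = cst x y"
proof
  assume "x \<in> Arg G y"
  then have x: "x \<in> G" "phi G y = ereal (cst x y)" unfolding Arg_def by auto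
  then have "y \<in> dom_phi G" unfolding dom_phi_def by auto
  then show "x \<in> G \<and> y \<in> dom_phi G \<and> phir G y = cst x y" using x phi_eq[of y] by simp
next
  assume "x \<in> G \<and> y \<in> dom_phi G \<and> phir G y = cst x y"
  then show "x \<in> Arg G y" unfolding Arg_def using phi_eq[of y] by simp
qed

lemma Arg_I: assumes "x \<in> G" "\<forall>x'\<in>G. cst x y \<le> cst x' y" shows "x \<in> Arg G y"
proof -
  have d: "y \<in> dom_phi G" "cst x y \<le> phir G y" using dom_I[OF assms(2)] by auto
  then show ?thesis unfolding Arg_iff using phir_le[OF d(1) assms(1)] assms(1) by simp
qed

lemma Arg_min: "x \<in> Arg G y \<Longrightarrow> x' \<in> G \<Longrightarrow> cst x y \<le> cst x' y"
  unfolding Arg_iff using phir_le by metis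

lemma Arg_G: "x \<in> Arg G y \<Longrightarrow> x \<in> G" using Arg_iff by auto
lemma Arg_dom: "x \<in> Arg G y \<Longrightarrow> y \<in> dom_phi G" using Arg_iff by auto
lemma Arg_phir: "x \<in> Arg G y \<Longrightarrow> phir G y = cst x y" using Arg_iff by auto


definition around :: "pt \<Rightarrow> bool" where
  "around y \<longleftrightarrow> (\<exists>xm\<in>G. \<exists>xp\<in>G. fst xm < fst y \<and> snd xm < snd y \<and> fst y < fst xp \<and> snd y < snd xp)"

lemma around_iff: "around y \<longleftrightarrow> (\<exists>a\<in>G. fst a < fst y) \<and> (\<exists>a\<in>G. snd a < snd y) \<and> (\<exists>a\<in>G. fst y < fst a) \<and> (\<exists>a\<in>G. snd y < snd a)"
proof
  assume "around y" then show "(\<exists>a\<in>G. fst a < fst y) \<and> (\<exists>a\<in>G. snd a < snd y) \<and> (\<exists>a\<in>G. fst y < fst a) \<and> (\<exists>a\<in>G. snd y < snd a)"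
    unfolding around_def by blast
next
  assume "(\<exists>a\<in>G. fst a < fst y) \<and> (\<exists>a\<in>G. snd a < snd y) \<and> (\<exists>a\<in>G. fst y < fst a) \<and> (\<exists>a\<in>G. snd y < snd a)"
  then obtain a b c d where abcd: "a \<in> G" "b \<in> G" "c \<in> G" "d \<in> G"
    "fst a < fst y" "snd b < snd y" "fst y < fst c" "snd y < snd d" by blast
  obtain m where m: "m \<in> G" "fst m \<le> fst a" "snd m \<le> snd b" using chain_min[OF abcd(1,2)] by blast
  obtain p where p: "p \<in> G" "fst c \<le> fst p" "snd d \<le> snd p" using chain_max[OF abcd(3,4)] by blast
  show "around y" unfolding around_def
    using m p abcd by (intro bexI[of _ m] bexI[of _ p]) auto
qed

lemma box_bound:
  assumes "around y"
  shows "\<exists>r>0. \<exists>W. \<forall>M. \<exists>R. \<forall>z. dist z y < r \<longrightarrow> (\<forall>x\<in>G. - W \<le> cst x z \<and> (cst x z \<le> M \<longrightarrow> norm x \<le> R))"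
proof -
  obtain xm xp where xs: "xm \<in> G" "xp \<in> G" "fst xm < fst y" "snd xm < snd y" "fst y < fst xp" "snd y < snd xp"
    using assms unfolding around_def by blast
  define g where "g = min (min (fst y - fst xm) (snd y - snd xm)) (min (fst xp - fst y) (snd xp - snd y))"
  have g: "g > 0" "g \<le> fst y - fst xm" "g \<le> snd y - snd xm" "g \<le> fst xp - fst y" "g \<le> snd xp - snd y"
    unfolding g_def using xs by auto
  define V where "V = max (fst xp - fst xm) (snd xp - snd xm)"
  have "\<forall>M. \<exists>R. \<forall>z. dist z y < g / 2 \<longrightarrow> (\<forall>x\<in>G. - (V * V) \<le> cst x z \<and> (cst x z \<le> M \<longrightarrow> norm x \<le> R))"
  proof
    fix M
    define Q where "Q = max V (2 * \<bar>M\<bar> / g)"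
    show "\<exists>R. \<forall>z. dist z y < g / 2 \<longrightarrow> (\<forall>x\<in>G. - (V * V) \<le> cst x z \<and> (cst x z \<le> M \<longrightarrow> norm x \<le> R))"
    proof (intro exI[of _ "\<bar>fst y\<bar> + \<bar>snd y\<bar> + g + 2 * Q"] allI impI ballI conjI)
      fix z x assume z: "dist z y < g / 2" and x: "x \<in> G"
      have z1: "\<bar>fst z - fst y\<bar> < g/2" and z2: "\<bar>snd z - snd y\<bar> < g/2"
        using abs_fst_le[of z y] abs_snd_le[of z y] z by auto
      have zz: "fst z - fst y < g/2" "fst y - fst z < g/2" "snd z - snd y < g/2" "snd y - snd z < g/2"
        using z1 z2 abs_less_iff[of "fst z - fst y" "g/2"] abs_less_iff[of "snd z - snd y" "g/2"] by linarith+
      have QV: "V \<le> Q" "2 * \<bar>M\<bar> / g \<le> Q" unfolding Q_def by auto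
      have V0: "0 \<le> V" unfolding V_def using xs by auto
      have vv: "- (V * V) \<le> 0" by simp
      have bnd: "\<bar>fst x - fst z\<bar> \<le> Q \<and> \<bar>snd x - snd z\<bar> \<le> Q \<and> - (V * V) \<le> cst x z" if cM: "cst x z \<le> M"
      proof -
        consider "fst x \<le> fst xm" "snd x \<le> snd xm" | "fst xp \<le> fst x" "snd xp \<le> snd x"
          | "fst xm \<le> fst x" "snd xm \<le> snd x" "fst x \<le> fst xp" "snd x \<le> snd xp"
          using chain[OF x xs(1)] chain[OF x xs(2)] by linarith
        then show ?thesis
        proof cases
          case 1
          have h1: "fst z - fst x \<ge> g/2" "snd z - snd x \<ge> g/2" using 1 zz g by linarith+
          have g2: "0 < g/2" using g by simp
          note c = cst_lower_case[OF g2 h1]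
          have m1: "(fst z - fst x) * g \<le> 2 * \<bar>M\<bar>" "(snd z - snd x) * g \<le> 2 * \<bar>M\<bar>" using c cM by (simp_all add: algebra_simps)
          have "fst z - fst x \<le> 2 * \<bar>M\<bar> / g" "snd z - snd x \<le> 2 * \<bar>M\<bar> / g" using m1 g by (simp_all add: pos_le_divide_eq)
          moreover have "0 \<le> cst x z" using c(1) h1 g2 mult_pos_pos[OF g2, of "fst z - fst x"] by linarith
          ultimately show ?thesis using h1 QV vv g(1) unfolding abs_le_iff by linarith
        next
          case 2
          have h1: "fst x - fst z \<ge> g/2" "snd x - snd z \<ge> g/2" using 2 zz g by linarith+
          have g2: "0 < g/2" using g by simp
          note c = cst_upper_case[OF g2 h1]
          have m1: "(fst x - fst z) * g \<le> 2 * \<bar>M\<bar>" "(snd x - snd z) * g \<le> 2 * \<bar>M\<bar>" using c cM by (simp_all add: algebra_simps)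
          have "fst x - fst z \<le> 2 * \<bar>M\<bar> / g" "snd x - snd z \<le> 2 * \<bar>M\<bar> / g" using m1 g by (simp_all add: pos_le_divide_eq)
          moreover have "0 \<le> cst x z" using c(1) h1 g2 mult_pos_pos[OF g2, of "fst x - fst z"] by linarith
          ultimately show ?thesis using h1 QV vv g(1) unfolding abs_le_iff by linarith
        next
          case 3
          have "\<bar>fst x - fst z\<bar> \<le> V" "\<bar>snd x - snd z\<bar> \<le> V" 
            using 3 zz g xs unfolding V_def by (auto simp: abs_le_iff)
          then show ?thesis using cst_mid_case QV by fastforce
        qed
      qed
      show "- (V * V) \<le> cst x z"
      proof -
        consider "fst x \<le> fst xm" "snd x \<le> snd xm" | "fst xp \<le> fst x" "snd xp \<le> snd x"
          | "fst xm \<le> fst x" "snd xm \<le> snd x" "fst x \<le> fst xp" "snd x \<le> snd xp"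
          using chain[OF x xs(1)] chain[OF x xs(2)] by linarith
        then show ?thesis
        proof cases
          case 1
          have "0 \<le> fst z - fst x" "0 \<le> snd z - snd x" using 1 zz g by linarith+
          then have "0 \<le> cst x z" unfolding cst_def by (metis diff_ge_0_iff_ge mult_nonpos_nonpos diff_le_0_iff_le)
          then show ?thesis using vv by linarith
        next
          case 2
          have "0 \<le> fst x - fst z" "0 \<le> snd x - snd z" using 2 zz g by linarith+
          then have "0 \<le> cst x z" unfolding cst_def by simp
          then show ?thesis using vv by linarith
        next
          case 3
          have "\<bar>fst x - fst z\<bar> \<le> V" "\<bar>snd x - snd z\<bar> \<le> V" 
            using 3 zz g xs unfolding V_def by (auto simp: abs_le_iff)
          then show ?thesis using cst_mid_case by blast
        qed
      qed
      show "norm x \<le> \<bar>fst y\<bar> + \<bar>snd y\<bar> + g + 2 * Q" if "cst x z \<le> M"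
      proof -
        have b: "\<bar>fst x - fst z\<bar> \<le> Q" "\<bar>snd x - snd z\<bar> \<le> Q" using bnd that by auto
        have "\<bar>fst x\<bar> + \<bar>snd x\<bar> \<le> \<bar>fst y\<bar> + \<bar>snd y\<bar> + g + 2 * Q" using b z1 z2 by linarith
        then show ?thesis using norm_le_abs[of x] by linarith
      qed
    qed
  qed
  then show ?thesis using g(1) by (intro exI[of _ "g/2"]) auto
qed



lemma not_bdd_below_ex: "\<not> bdd_below S \<Longrightarrow> \<exists>x\<in>S. x < (m::real)"
  unfolding bdd_below_def by (meson not_le)

lemma not_bdd_above_ex: "\<not> bdd_above S \<Longrightarrow> \<exists>x\<in>S. (m::real) < x"
  unfolding bdd_above_def by (meson not_le)

lemma dom_lower1: assumes z: "z \<in> dom_phi G" and e: "e > 0" shows "\<exists>x\<in>G. fst x < fst z + e"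
proof (rule ccontr)
  assume "\<not> ?thesis"
  then have a: "\<forall>x\<in>G. fst z + e \<le> fst x" by auto
  then have "bdd_below (fst ` G)" unfolding bdd_below_def by auto
  then have "\<not> bdd_below (snd ` G)" using not_both_bdd_below by blast
  then obtain x where x: "x \<in> G" "snd x < snd z - \<bar>phir G z\<bar> / e - 1"
    using not_bdd_below_ex[of "snd ` G" "snd z - \<bar>phir G z\<bar> / e - 1"] by auto
  have b: "snd x - snd z < - \<bar>phir G z\<bar> / e - 1" using x by simp
  have bn: "snd x - snd z < 0" using b e divide_nonneg_pos[OF abs_ge_zero[of "phir G z"] e] by linarith
  have "cst x z = (fst x - fst z) * (snd x - snd z)" unfolding cst_def ..
  also have "\<dots> \<le> e * (snd x - snd z)" using mult_right_mono_neg[of e "fst x - fst z" "snd x - snd z"] a[rule_format, OF x(1)] bn by simp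
  also have "\<dots> < e * (- \<bar>phir G z\<bar> / e - 1)" using b e by simp
  also have "\<dots> = - \<bar>phir G z\<bar> - e" using e by (simp add: field_simps)
  finally have "cst x z < phir G z" using e by linarith
  then show False using phir_le[OF z x(1)] by linarith
qed

lemma dom_lower2: assumes z: "z \<in> dom_phi G" and e: "e > 0" shows "\<exists>x\<in>G. snd x < snd z + e"
proof (rule ccontr)
  assume "\<not> ?thesis"
  then have a: "\<forall>x\<in>G. snd z + e \<le> snd x" by auto
  then have "bdd_below (snd ` G)" unfolding bdd_below_def by auto
  then have "\<not> bdd_below (fst ` G)" using not_both_bdd_below by blast
  then obtain x where x: "x \<in> G" "fst x < fst z - \<bar>phir G z\<bar> / e - 1"
    using not_bdd_below_ex[of "fst ` G" "fst z - \<bar>phir G z\<bar> / e - 1"] by auto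
  have b: "fst x - fst z < - \<bar>phir G z\<bar> / e - 1" using x by simp
  have bn: "fst x - fst z < 0" using b e divide_nonneg_pos[OF abs_ge_zero[of "phir G z"] e] by linarith
  have "cst x z = (snd x - snd z) * (fst x - fst z)" unfolding cst_def by simp
  also have "\<dots> \<le> e * (fst x - fst z)" using mult_right_mono_neg[of e "snd x - snd z" "fst x - fst z"] a[rule_format, OF x(1)] bn by simp
  also have "\<dots> < e * (- \<bar>phir G z\<bar> / e - 1)" using b e by simp
  also have "\<dots> = - \<bar>phir G z\<bar> - e" using e by (simp add: field_simps)
  finally have "cst x z < phir G z" using e by linarith
  then show False using phir_le[OF z x(1)] by linarith
qed

lemma dom_upper1: assumes z: "z \<in> dom_phi G" and e: "e > 0" shows "\<exists>x\<in>G. fst z - e < fst x"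
proof (rule ccontr)
  assume "\<not> ?thesis"
  then have a: "\<forall>x\<in>G. fst x \<le> fst z - e" by auto
  then have "bdd_above (fst ` G)" unfolding bdd_above_def by auto
  then have "\<not> bdd_above (snd ` G)" using not_both_bdd_above by blast
  then obtain x where x: "x \<in> G" "snd z + \<bar>phir G z\<bar> / e + 1 < snd x"
    using not_bdd_above_ex[of "snd ` G" "snd z + \<bar>phir G z\<bar> / e + 1"] by auto
  have b: "\<bar>phir G z\<bar> / e + 1 < snd x - snd z" using x by simp
  have bn: "0 < snd x - snd z" using b e divide_nonneg_pos[OF abs_ge_zero[of "phir G z"] e] by linarith
  have "cst x z = (fst x - fst z) * (snd x - snd z)" unfolding cst_def ..
  also have "\<dots> \<le> (- e) * (snd x - snd z)" using mult_right_mono[of "fst x - fst z" "- e" "snd x - snd z"] a[rule_format, OF x(1)] bn by simp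
  also have "\<dots> < (- e) * (\<bar>phir G z\<bar> / e + 1)" using b e by simp
  also have "\<dots> = - \<bar>phir G z\<bar> - e" using e by (simp add: field_simps)
  finally have "cst x z < phir G z" using e by linarith
  then show False using phir_le[OF z x(1)] by linarith
qed

lemma dom_upper2: assumes z: "z \<in> dom_phi G" and e: "e > 0" shows "\<exists>x\<in>G. snd z - e < snd x"
proof (rule ccontr)
  assume "\<not> ?thesis"
  then have a: "\<forall>x\<in>G. snd x \<le> snd z - e" by auto
  then have "bdd_above (snd ` G)" unfolding bdd_above_def by auto
  then have "\<not> bdd_above (fst ` G)" using not_both_bdd_above by blast
  then obtain x where x: "x \<in> G" "fst z + \<bar>phir G z\<bar> / e + 1 < fst x"
    using not_bdd_above_ex[of "fst ` G" "fst z + \<bar>phir G z\<bar> / e + 1"] by auto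
  have b: "\<bar>phir G z\<bar> / e + 1 < fst x - fst z" using x by simp
  have bn: "0 < fst x - fst z" using b e divide_nonneg_pos[OF abs_ge_zero[of "phir G z"] e] by linarith
  have "cst x z = (snd x - snd z) * (fst x - fst z)" unfolding cst_def by simp
  also have "\<dots> \<le> (- e) * (fst x - fst z)" using mult_right_mono[of "snd x - snd z" "- e" "fst x - fst z"] a[rule_format, OF x(1)] bn by simp
  also have "\<dots> < (- e) * (\<bar>phir G z\<bar> / e + 1)" using b e by simp
  also have "\<dots> = - \<bar>phir G z\<bar> - e" using e by (simp add: field_simps)
  finally have "cst x z < phir G z" using e by linarith
  then show False using phir_le[OF z x(1)] by linarith
qed

lemma dist_shift: "dist (fst y + a, snd y + b) y = sqrt (a\<^sup>2 + b\<^sup>2)"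
  by (cases y) (simp add: dist_Pair_Pair dist_real_def)

lemma int_D: assumes "y \<in> interior (dom_phi G)" shows "around y"
proof -
  obtain r where r: "r > 0" "ball y r \<subseteq> dom_phi G" using assms by (meson mem_interior)
  have inb: "(fst y + a, snd y + b) \<in> dom_phi G" if "\<bar>a\<bar> + \<bar>b\<bar> < r" for a b
  proof -
    have "sqrt (a\<^sup>2 + b\<^sup>2) \<le> \<bar>a\<bar> + \<bar>b\<bar>"
      using norm_le_abs[of "(a, b)"] by (simp add: norm_Pair)
    then have "dist (fst y + a, snd y + b) y < r" using dist_shift[of y a b] that by linarith
    then show ?thesis using r(2) by (auto simp: dist_commute)
  qed
  have d: "(fst y - r/2, snd y) \<in> dom_phi G" "(fst y, snd y - r/2) \<in> dom_phi G"
    "(fst y + r/2, snd y) \<in> dom_phi G" "(fst y, snd y + r/2) \<in> dom_phi G"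
    using inb[of "- r/2" 0] inb[of 0 "- r/2"] inb[of "r/2" 0] inb[of 0 "r/2"] r(1) by simp_all
  have h: "r/2 > 0" using r by simp
  show ?thesis unfolding around_iff
    using dom_lower1[OF d(1) h] dom_lower2[OF d(2) h] dom_upper1[OF d(3) h] dom_upper2[OF d(4) h] by auto
qed

lemma int_I: assumes "around y" shows "y \<in> interior (dom_phi G)"
proof -
  obtain r W where r: "r > 0" "\<forall>M. \<exists>R. \<forall>z. dist z y < r \<longrightarrow> (\<forall>x\<in>G. - W \<le> cst x z \<and> (cst x z \<le> M \<longrightarrow> norm x \<le> R))"
    using box_bound[OF assms] by blast
  have "ball y r \<subseteq> dom_phi G"
  proof
    fix z assume "z \<in> ball y r"
    then have "dist z y < r" by (simp add: dist_commute)
    then have "\<forall>x\<in>G. - W \<le> cst x z" using r(2) by blast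
    then show "z \<in> dom_phi G" by (rule dom_I)
  qed
  then show ?thesis using r(1) by (meson mem_interior)
qed

lemma interior_iff: "y \<in> interior (dom_phi G) \<longleftrightarrow> around y"
  using int_D int_I by blast

lemma Arg_exists: assumes "y \<in> interior (dom_phi G)" shows "\<exists>x. x \<in> Arg G y"
proof -
  obtain x0 where x0: "x0 \<in> G" using nonempty by auto
  obtain r W where r: "r > 0" "\<forall>M. \<exists>R. \<forall>z. dist z y < r \<longrightarrow> (\<forall>x\<in>G. - W \<le> cst x z \<and> (cst x z \<le> M \<longrightarrow> norm x \<le> R))"
    using box_bound[OF int_D[OF assms]] by blast
  obtain R where R0: "\<forall>z. dist z y < r \<longrightarrow> (\<forall>x\<in>G. - W \<le> cst x z \<and> (cst x z \<le> cst x0 y \<longrightarrow> norm x \<le> R))"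
    using r(2) by blast
  have R: "\<forall>x\<in>G. cst x y \<le> cst x0 y \<longrightarrow> norm x \<le> R" using R0[rule_format, of y] r(1) by simp
  define K where "K = G \<inter> cball 0 R"
  have cK: "compact K" unfolding K_def using closedG by (intro closed_Int_compact) auto
  have x0K: "x0 \<in> K" unfolding K_def using R x0 by auto
  have ct: "continuous_on K (\<lambda>x. cst x y)" unfolding cst_def by (intro continuous_intros)
  obtain k where k: "k \<in> K" "\<forall>x\<in>K. cst k y \<le> cst x y"
    using continuous_attains_inf[OF cK _ ct] x0K by blast
  have "\<forall>x\<in>G. cst k y \<le> cst x y"
  proof
    fix x assume x: "x \<in> G"
    show "cst k y \<le> cst x y"
    proof (cases "norm x \<le> R")
      case True then show ?thesis using k x unfolding K_def by auto
    next
      case False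
      then have "cst x0 y < cst x y" using R x by force
      moreover have "cst k y \<le> cst x0 y" using k x0K by auto
      ultimately show ?thesis by linarith
    qed
  qed
  then show ?thesis using Arg_I k(1) unfolding K_def by blast
qed

end

definition gc :: "pt \<Rightarrow> pt \<Rightarrow> pt" where "gc x y = (snd y - snd x, fst y - fst x)"
definition xof :: "pt \<Rightarrow> pt \<Rightarrow> pt" where "xof y g = (fst y - snd g, snd y - fst g)"

lemma xof_gc[simp]: "xof y (gc x y) = x"
  unfolding xof_def gc_def by simp

lemma gc_xof[simp]: "gc (xof y g) y = g"
  unfolding xof_def gc_def by simp

lemma cst_expand: "cst x w = cst x y + inner (w - y) (gc x y) + (fst w - fst y) * (snd w - snd y)"
  unfolding cst_def gc_def by (cases w; cases y; simp add: algebra_simps)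

lemma fst_abs_le_norm: "\<bar>fst (v::pt)\<bar> \<le> norm v"
  by (cases v) (auto simp: norm_Pair intro!: real_le_rsqrt)
lemma snd_abs_le_norm: "\<bar>snd (v::pt)\<bar> \<le> norm v"
  by (cases v) (auto simp: norm_Pair intro!: real_le_rsqrt)

lemma quad_le: "\<bar>(fst w - fst y) * (snd w - snd y)\<bar> \<le> norm (w - y) * norm (w - y)"
proof -
  have "\<bar>(fst w - fst y) * (snd w - snd y)\<bar> = \<bar>fst (w - y)\<bar> * \<bar>snd (w - y)\<bar>" by (simp add: abs_mult)
  also have "\<dots> \<le> norm (w - y) * norm (w - y)"
    by (intro mult_mono fst_abs_le_norm snd_abs_le_norm) auto
  finally show ?thesis .
qed

lemma gc_diff_norm: "norm (gc a y - gc b y) = norm (a - b)"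
proof -
  have "gc a y - gc b y = (snd b - snd a, fst b - fst a)" unfolding gc_def by simp
  then have "norm (gc a y - gc b y) = sqrt ((snd b - snd a)\<^sup>2 + (fst b - fst a)\<^sup>2)" by (simp add: norm_Pair)
  also have "\<dots> = sqrt ((fst a - fst b)\<^sup>2 + (snd a - snd b)\<^sup>2)" by (simp add: power2_commute add.commute)
  also have "\<dots> = norm (a - b)" by (cases a; cases b; simp add: norm_Pair)
  finally show ?thesis .
qed

lemma cst_gderiv: "GDERIV (\<lambda>z. cst x z) y :> gc x y"
proof -
  have f1: "(fst has_derivative fst) (at y)" using bounded_linear_fst by (rule bounded_linear_imp_has_derivative)
  have f2: "(snd has_derivative snd) (at y)" using bounded_linear_snd by (rule bounded_linear_imp_has_derivative)
  have d1: "((\<lambda>z. fst x - fst z) has_derivative (\<lambda>h. 0 - fst h)) (at y)"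
    by (rule has_derivative_diff[OF has_derivative_const f1])
  have d2: "((\<lambda>z. snd x - snd z) has_derivative (\<lambda>h. 0 - snd h)) (at y)"
    by (rule has_derivative_diff[OF has_derivative_const f2])
  have "((\<lambda>z. (fst x - fst z) * (snd x - snd z)) has_derivative
     (\<lambda>h. (fst x - fst y) * (0 - snd h) + (0 - fst h) * (snd x - snd y))) (at y)"
    by (rule has_derivative_mult[OF d1 d2])
  then show ?thesis unfolding gderiv_def gc_def cst_def
    by (rule has_derivative_eq_rhs) (auto simp: algebra_simps fun_eq_iff)
qed

lemma cst_lip: assumes "dist w y \<le> 1"
  shows "\<bar>cst a w - cst a y\<bar> \<le> (2 * norm a + 2 * norm y + 1) * dist w y"
proof -
  have e: "cst a w - cst a y = inner (w - y) (gc a y) + (fst w - fst y) * (snd w - snd y)"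
    using cst_expand[of a w y] by simp
  have n: "norm (w - y) = dist w y" by (simp add: dist_norm)
  have "\<bar>inner (w - y) (gc a y)\<bar> \<le> norm (w - y) * norm (gc a y)" by (rule Cauchy_Schwarz_ineq2)
  moreover have "norm (gc a y) \<le> 2 * norm a + 2 * norm y"
  proof -
    have "norm (gc a y) \<le> \<bar>snd y - snd a\<bar> + \<bar>fst y - fst a\<bar>" using norm_le_abs[of "gc a y"] unfolding gc_def by simp
    also have "\<dots> \<le> 2 * norm a + 2 * norm y"
      using fst_abs_le_norm[of a] snd_abs_le_norm[of a] fst_abs_le_norm[of y] snd_abs_le_norm[of y] by linarith
    finally show ?thesis .
  qed
  moreover have "\<bar>(fst w - fst y) * (snd w - snd y)\<bar> \<le> dist w y"
  proof -
    have "dist w y * dist w y \<le> dist w y * 1" using assms by (intro mult_left_mono) auto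
    then show ?thesis using quad_le[of w y] n by simp
  qed
  ultimately have "\<bar>cst a w - cst a y\<bar> \<le> dist w y * (2 * norm a + 2 * norm y) + dist w y"
    unfolding e n using mult_left_mono[of "norm (gc a y)" "2 * norm a + 2 * norm y" "dist w y"]
      abs_triangle_ineq[of "inner (w - y) (gc a y)" "(fst w - fst y) * (snd w - snd y)"] zero_le_dist[of w y]
    by linarith
  then show ?thesis by (simp add: algebra_simps)
qed

context MM begin

lemma fermat:
  assumes y: "y \<in> interior (dom_phi G)" and D: "GDERIV (phir G) y :> D" and x: "x \<in> Arg G y"
  shows "D = gc x y"
proof -
  have d: "GDERIV (\<lambda>z. cst x z - phir G z) y :> (gc x y - D)"
    by (rule GDERIV_diff[OF cst_gderiv D])
  have ev: "eventually (\<lambda>z. cst x y - phir G y \<le> cst x z - phir G z) (at y)"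
    unfolding eventually_at_topological
  proof (intro exI[of _ "interior (dom_phi G)"] conjI ballI impI)
    fix z assume "z \<in> interior (dom_phi G)"
    then have "z \<in> dom_phi G" using interior_subset by blast
    then show "cst x y - phir G y \<le> cst x z - phir G z"
      using phir_le[OF _ Arg_G[OF x]] Arg_phir[OF x] by simp
  qed (use y in auto)
  have "(\<lambda>h. inner h (gc x y - D)) = (\<lambda>h. 0)"
    using has_derivative_local_min[OF d[unfolded gderiv_def] ev] .
  then have "inner (gc x y - D) (gc x y - D) = 0" by metis
  then show ?thesis by simp
qed

lemma diff_pts_Arg: assumes "y \<in> diff_pts G"
  shows "Arg G y = {xof y (cgrad G y)}" "GDERIV (phir G) y :> cgrad G y"
proof -
  have y: "y \<in> interior (dom_phi G)" and "\<exists>D. GDERIV (phir G) y :> D" using assms unfolding diff_pts_def by auto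
  then show D: "GDERIV (phir G) y :> cgrad G y" unfolding cgrad_def by (metis someI)
  obtain x where x: "x \<in> Arg G y" using Arg_exists[OF y] by blast
  have "\<forall>x'\<in>Arg G y. x' = xof y (cgrad G y)" using fermat[OF y D] by auto
  then have "Arg G y \<subseteq> {xof y (cgrad G y)}" by blast
  moreover have "xof y (cgrad G y) \<in> Arg G y" using x \<open>\<forall>x'\<in>Arg G y. x' = xof y (cgrad G y)\<close> by metis
  ultimately show "Arg G y = {xof y (cgrad G y)}" by blast
qed

lemma NF:
  assumes A: "Arg G y = {x}" and e: "e > 0"
  shows "\<exists>d>0. \<forall>w x'. dist w y < d \<longrightarrow> x' \<in> Arg G w \<longrightarrow> norm x' \<le> R \<longrightarrow> norm (x' - x) < e"
proof -
  have xA: "x \<in> Arg G y" using A by auto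
  have xG: "x \<in> G" and yd: "y \<in> dom_phi G" and px: "phir G y = cst x y"
    using Arg_G[OF xA] Arg_dom[OF xA] Arg_phir[OF xA] by auto
  define K where "K = G \<inter> cball 0 R \<inter> {x'. e \<le> norm (x' - x)}"
  have cl: "closed {x'. e \<le> norm (x' - x)}" by (intro closed_Collect_le continuous_intros)
  have cK: "compact K" unfolding K_def
    by (rule compact_Int_closed[OF closed_Int_compact[OF closedG compact_cball] cl])
  show ?thesis
  proof (cases "K = {}")
    case True
    show ?thesis
    proof (intro exI[of _ 1] conjI allI impI)
      fix w x' assume "x' \<in> Arg G w" "norm x' \<le> R"
      then show "norm (x' - x) < e" using True Arg_G unfolding K_def by fastforce
    qed simp
  next
    case False
    have ct: "continuous_on K (\<lambda>x'. cst x' y)" unfolding cst_def by (intro continuous_intros)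
    obtain k where k: "k \<in> K" "\<forall>x'\<in>K. cst k y \<le> cst x' y"
      using continuous_attains_inf[OF cK False ct] by blast
    have kG: "k \<in> G" and kx: "k \<noteq> x" using k(1) e unfolding K_def by auto
    have "cst x y \<le> cst k y" using phir_le[OF yd kG] px by simp
    moreover have "cst x y \<noteq> cst k y"
    proof
      assume "cst x y = cst k y"
      then have "k \<in> Arg G y" using Arg_iff kG yd px by simp
      then show False using A kx by blast
    qed
    ultimately have eta: "cst x y < cst k y" by simp
    define \<eta> where "\<eta> = cst k y - cst x y"
    have eta0: "\<eta> > 0" using eta unfolding \<eta>_def by simp
    define L where "L = 2 * max R (norm x) + 2 * norm y + 1"
    have "0 \<le> max R (norm x)" by (simp add: le_max_iff_disj)
    then have L0: "L > 0" unfolding L_def using norm_ge_zero[of y] by linarith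
    define d where "d = min 1 (\<eta> / (3 * L))"
    have d0: "d > 0" unfolding d_def using eta0 L0 by simp
    show ?thesis
    proof (intro exI[of _ d] conjI allI impI d0)
      fix w x' assume w: "dist w y < d" and x': "x' \<in> Arg G w" and nx: "norm x' \<le> R"
      show "norm (x' - x) < e"
      proof (rule ccontr)
        assume "\<not> norm (x' - x) < e"
        then have x'K: "x' \<in> K" unfolding K_def using x' Arg_G nx by auto
        have w1: "dist w y \<le> 1" using w unfolding d_def by simp
        have Ld: "L * dist w y \<le> \<eta> / 3"
        proof -
          have "dist w y \<le> \<eta> / (3 * L)" using w unfolding d_def by simp
          then have "L * dist w y \<le> L * (\<eta> / (3 * L))" using L0 by (intro mult_left_mono) auto
          also have "\<dots> = \<eta> / 3" using L0 by (simp add: field_simps)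
          finally show ?thesis .
        qed
        have l1: "\<bar>cst x' w - cst x' y\<bar> \<le> L * dist w y"
        proof -
          have "\<bar>cst x' w - cst x' y\<bar> \<le> (2 * norm x' + 2 * norm y + 1) * dist w y" by (rule cst_lip[OF w1])
          also have "\<dots> \<le> L * dist w y" unfolding L_def using nx by (intro mult_right_mono) auto
          finally show ?thesis .
        qed
        have l2: "\<bar>cst x w - cst x y\<bar> \<le> L * dist w y"
        proof -
          have "\<bar>cst x w - cst x y\<bar> \<le> (2 * norm x + 2 * norm y + 1) * dist w y" by (rule cst_lip[OF w1])
          also have "\<dots> \<le> L * dist w y" unfolding L_def by (intro mult_right_mono) auto
          finally show ?thesis .
        qed
        have "cst k y \<le> cst x' y" using k x'K by auto
        then have "cst x w < cst x' w" using l1 l2 Ld eta unfolding \<eta>_def abs_le_iff by (elim conjE) (simp add: field_simps)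
        moreover have "cst x' w \<le> cst x w" using Arg_min[OF x' xG] .
        ultimately show False by linarith
      qed
    qed
  qed
qed


lemma DU:
  assumes y: "y \<in> interior (dom_phi G)" and A: "Arg G y = {x}"
  shows "GDERIV (phir G) y :> gc x y"
proof -
  have xA: "x \<in> Arg G y" using A by auto
  have xG: "x \<in> G" and yd: "y \<in> dom_phi G" and px: "phir G y = cst x y"
    using Arg_G[OF xA] Arg_dom[OF xA] Arg_phir[OF xA] by auto
  obtain r W where r: "r > 0" "\<forall>M. \<exists>R. \<forall>z. dist z y < r \<longrightarrow> (\<forall>x\<in>G. - W \<le> cst x z \<and> (cst x z \<le> M \<longrightarrow> norm x \<le> R))"
    using box_bound[OF int_D[OF y]] by blast
  obtain R where R: "\<forall>z. dist z y < r \<longrightarrow> (\<forall>x'\<in>G. - W \<le> cst x' z \<and> (cst x' z \<le> cst x y + 1 \<longrightarrow> norm x' \<le> R))"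
    using r(2) by blast
  obtain r0 where r0: "r0 > 0" "ball y r0 \<subseteq> interior (dom_phi G)"
    using y open_contains_ball open_interior by blast
  define Lx where "Lx = 2 * norm x + 2 * norm y + 1"
  have Lx0: "Lx > 0" unfolding Lx_def using norm_ge_zero[of x] norm_ge_zero[of y] by linarith
  show ?thesis unfolding gderiv_def has_derivative_at_alt
  proof (intro conjI allI impI bounded_linear_inner_left)
    fix e :: real assume e: "e > 0"
    obtain d1 where d1: "d1 > 0" "\<forall>w x'. dist w y < d1 \<longrightarrow> x' \<in> Arg G w \<longrightarrow> norm x' \<le> R \<longrightarrow> norm (x' - x) < e/2"
      using NF[OF A, of "e/2" R] e by auto
    define d where "d = min (min r r0) (min 1 (min (1/Lx) (min d1 (e/2))))"
    have d0: "d > 0" unfolding d_def using r r0 Lx0 d1 e by simp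
    show "\<exists>d>0. \<forall>w. norm (w - y) < d \<longrightarrow> norm (phir G w - phir G y - inner (w - y) (gc x y)) \<le> e * norm (w - y)"
    proof (intro exI[of _ d] conjI allI impI d0)
      fix w assume w: "norm (w - y) < d"
      define n where "n = norm (w - y)"
      have dn: "dist w y = n" unfolding n_def by (simp add: dist_norm)
      have n0: "0 \<le> n" unfolding n_def by simp
      have wi: "w \<in> interior (dom_phi G)" using w r0 unfolding d_def by (auto simp: dist_norm norm_minus_commute)
      then have wd: "w \<in> dom_phi G" using interior_subset by blast
      obtain xw where xw: "xw \<in> Arg G w" using Arg_exists[OF wi] by blast
      have xwG: "xw \<in> G" and pw: "phir G w = cst xw w" using Arg_G[OF xw] Arg_phir[OF xw] by auto
      have n1: "n \<le> 1" and nL: "n < 1 / Lx" and nr: "n < r" and nd1: "n < d1" and ne: "n < e/2"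
        using w unfolding d_def n_def by auto
      have "Lx * n < Lx * (1 / Lx)" using nL Lx0 by (intro mult_strict_left_mono) auto
      then have Ln: "Lx * n < 1" using Lx0 by simp
      have "\<bar>cst x w - cst x y\<bar> \<le> Lx * n" using cst_lip[of w y x] n1 dn unfolding Lx_def by simp
      then have cxw: "cst x w \<le> cst x y + 1" using Ln by linarith
      have "cst xw w \<le> cst x w" using phir_le[OF wd xG] pw by simp
      then have "norm xw \<le> R" using R[rule_format, of w xw] nr dn xwG cxw by linarith
      moreover have "dist w y < d1" using nd1 dn by simp
      ultimately have nx: "norm (xw - x) < e/2" using d1(2) xw by blast
      define q where "q = (fst w - fst y) * (snd w - snd y)"
      have q: "\<bar>q\<bar> \<le> n * n" unfolding q_def n_def by (rule quad_le)
      have "n * n \<le> n * (e/2)" using ne n0 by (intro mult_left_mono) auto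
      then have q2: "\<bar>q\<bar> \<le> n * (e/2)" using q by linarith
      have up: "phir G w - phir G y - inner (w - y) (gc x y) \<le> q"
        using phir_le[OF wd xG] px cst_expand[of x w y] unfolding q_def by linarith
      have "phir G y \<le> cst xw y" using phir_le[OF yd xwG] .
      then have lo0: "phir G w - phir G y - inner (w - y) (gc x y) \<ge> inner (w - y) (gc xw y) - inner (w - y) (gc x y) + q"
        using pw cst_expand[of xw w y] unfolding q_def by linarith
      have "\<bar>inner (w - y) (gc xw y - gc x y)\<bar> \<le> n * norm (gc xw y - gc x y)"
        unfolding n_def by (rule Cauchy_Schwarz_ineq2)
      also have "\<dots> = n * norm (xw - x)" by (simp add: gc_diff_norm)
      also have "\<dots> \<le> n * (e/2)" using nx n0 by (intro mult_left_mono) auto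
      finally have ip: "\<bar>inner (w - y) (gc xw y) - inner (w - y) (gc x y)\<bar> \<le> n * (e/2)"
        by (simp add: inner_diff_right)
      have "\<bar>phir G w - phir G y - inner (w - y) (gc x y)\<bar> \<le> n * (e/2) + n * (e/2)"
        using up lo0 ip q2 unfolding abs_le_iff by (elim conjE) linarith
      then show "norm (phir G w - phir G y - inner (w - y) (gc x y)) \<le> e * norm (w - y)"
        unfolding n_def[symmetric] by (simp add: algebra_simps)
    qed
  qed
qed

lemma Arg_sum_mono:
  assumes a: "a \<in> Arg G (fst z + s, snd z + s)" and b: "b \<in> Arg G (fst z + t, snd z + t)" and st: "s < t"
  shows "fst a + snd a \<le> fst b + snd b"
proof -
  have "cst a (fst z + s, snd z + s) \<le> cst b (fst z + s, snd z + s)" using Arg_min[OF a Arg_G[OF b]] .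
  moreover have "cst b (fst z + t, snd z + t) \<le> cst a (fst z + t, snd z + t)" using Arg_min[OF b Arg_G[OF a]] .
  ultimately have "(t - s) * ((fst a + snd a) - (fst b + snd b)) \<le> 0"
    unfolding cst_def by (simp add: algebra_simps)
  then show ?thesis using st by (simp add: mult_le_0_iff)
qed

lemma chain_sum_eq: "a \<in> G \<Longrightarrow> b \<in> G \<Longrightarrow> fst a + snd a = fst b + snd b \<Longrightarrow> a = b"
  using chain[of a b] by (auto simp: prod_eq_iff)

end

lemma seq_inv_tendsto: assumes "\<forall>n. dist (f n) y < inverse (real (Suc n))" shows "f \<longlonglongrightarrow> y"
  unfolding lim_sequentially
proof (intro allI impI)
  fix r :: real assume r: "r > 0"
  obtain N where N: "inverse (real (Suc N)) < r" using reals_Archimedean[OF r] by auto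
  have "\<forall>n\<ge>N. dist (f n) y < r"
  proof (intro allI impI)
    fix n assume "n \<ge> N"
    then have "inverse (real (Suc n)) \<le> inverse (real (Suc N))" by (simp add: field_simps)
    then show "dist (f n) y < r" using assms N by (meson le_less_trans less_trans not_le)
  qed
  then show "\<exists>no. \<forall>n\<ge>no. dist (f n) y < r" by blast
qed

lemma inner10: "inner (1::real, 0::real) (x::pt) = fst x" by (cases x) simp
lemma inner01: "inner (0::real, 1::real) (x::pt) = snd x" by (cases x) simp

context MM begin

lemma density:
  assumes z: "z \<in> interior (dom_phi G)" and e: "e > 0"
  shows "\<exists>w\<in>diff_pts G. dist w z < e"
proof -
  obtain r0 where r0: "r0 > 0" "ball z r0 \<subseteq> interior (dom_phi G)"
    using z open_contains_ball open_interior by blast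
  define \<rho> where "\<rho> = min (r0/2) (e/2)"
  have rho: "\<rho> > 0" "2 * \<rho> \<le> r0" "2 * \<rho> \<le> e" unfolding \<rho>_def using r0 e by auto
  define p where "p s = (fst z + s, snd z + s)" for s
  have pd: "dist (p s) z < 2 * \<rho>" if "s \<in> {-\<rho><..<\<rho>}" for s
  proof -
    have "sqrt (s\<^sup>2 + s\<^sup>2) \<le> \<bar>s\<bar> + \<bar>s\<bar>" using norm_le_abs[of "(s, s)"] by (simp add: norm_Pair)
    moreover have "\<bar>s\<bar> < \<rho>" using that by auto
    ultimately show ?thesis using dist_shift[of z s s] unfolding p_def by linarith
  qed
  have pint: "p s \<in> interior (dom_phi G)" if "s \<in> {-\<rho><..<\<rho>}" for s
    using pd[OF that] rho r0 by (auto simp: dist_commute)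
  define bad where "bad = {s \<in> {-\<rho><..<\<rho>}. \<not> (\<exists>x. Arg G (p s) = {x})}"
  have two: "\<exists>a\<in>Arg G (p s). \<exists>b\<in>Arg G (p s). fst a + snd a < fst b + snd b" if "s \<in> bad" for s
  proof -
    have si: "s \<in> {-\<rho><..<\<rho>}" and ns: "\<not> (\<exists>x. Arg G (p s) = {x})" using that unfolding bad_def by auto
    obtain a where a: "a \<in> Arg G (p s)" using Arg_exists[OF pint[OF si]] by blast
    obtain b where b: "b \<in> Arg G (p s)" "b \<noteq> a" using ns a by blast
    have "fst a + snd a \<noteq> fst b + snd b" using chain_sum_eq[OF Arg_G[OF a] Arg_G[OF b(1)]] b(2) by metis
    then show ?thesis using a b(1) by (metis linorder_neqE_linordered_idom)
  qed
  define q where "q s = (SOME r. r \<in> \<rat> \<and> (\<exists>a\<in>Arg G (p s). \<exists>b\<in>Arg G (p s). fst a + snd a < r \<and> r < fst b + snd b))" for s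
  have qprop: "q s \<in> \<rat> \<and> (\<exists>a\<in>Arg G (p s). \<exists>b\<in>Arg G (p s). fst a + snd a < q s \<and> q s < fst b + snd b)"
    if sb: "s \<in> bad" for s
  proof -
    obtain a b where ab: "a \<in> Arg G (p s)" "b \<in> Arg G (p s)" "fst a + snd a < fst b + snd b" using two[OF sb] by blast
    obtain r where "r \<in> \<rat>" "fst a + snd a < r" "r < fst b + snd b" using Rats_dense_in_real[OF ab(3)] by blast
    then have "\<exists>r. r \<in> \<rat> \<and> (\<exists>a\<in>Arg G (p s). \<exists>b\<in>Arg G (p s). fst a + snd a < r \<and> r < fst b + snd b)"
      using ab by blast
    then show ?thesis unfolding q_def by (rule someI_ex)
  qed
  have qlt: "q s < q t" if st: "s \<in> bad" "t \<in> bad" "s < t" for s t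
  proof -
    obtain a b where ab: "a \<in> Arg G (p s)" "b \<in> Arg G (p s)" "q s < fst b + snd b" using qprop[OF st(1)] by blast
    obtain a' b' where ab': "a' \<in> Arg G (p t)" "b' \<in> Arg G (p t)" "fst a' + snd a' < q t" using qprop[OF st(2)] by blast
    have "fst b + snd b \<le> fst a' + snd a'" using Arg_sum_mono[of b z s a' t] ab(2) ab'(1) st(3) unfolding p_def by simp
    then show ?thesis using ab(3) ab'(3) by linarith
  qed
  have inj: "inj_on q bad"
  proof (rule inj_onI)
    fix s t assume st: "s \<in> bad" "t \<in> bad" "q s = q t"
    show "s = t"
    proof (rule ccontr)
      assume "s \<noteq> t"
      then consider "s < t" | "t < s" by linarith
      then show False using qlt st by (metis less_irrefl)
    qed
  qed
  have "q ` bad \<subseteq> \<rat>" using qprop by blast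
  then have "countable (q ` bad)" using countable_rat countable_subset by blast
  then have cb: "countable bad" using countable_image_inj_on inj by blast
  have "\<not> {-\<rho><..<\<rho>} \<subseteq> bad"
  proof
    assume "{-\<rho><..<\<rho>} \<subseteq> bad"
    then have "countable {-\<rho><..<\<rho>}" using cb countable_subset by blast
    moreover have "uncountable {-\<rho><..<\<rho>}" using rho(1) uncountable_open_interval by simp
    ultimately show False by blast
  qed
  then obtain s where s: "s \<in> {-\<rho><..<\<rho>}" "s \<notin> bad" by blast
  then obtain x where x: "Arg G (p s) = {x}" unfolding bad_def by blast
  have "GDERIV (phir G) (p s) :> gc x (p s)" using DU[OF pint[OF s(1)] x] .
  then have "p s \<in> diff_pts G" unfolding diff_pts_def using pint[OF s(1)] by blast
  moreover have "dist (p s) z < e" using pd[OF s(1)] rho by linarith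
  ultimately show ?thesis by blast
qed

lemma diff_seq:
  assumes "y \<in> closure (interior (dom_phi G))"
  shows "\<exists>ys. (\<forall>n. ys n \<in> diff_pts G) \<and> ys \<longlonglongrightarrow> y"
proof -
  have "\<exists>w. w \<in> diff_pts G \<and> dist w y < inverse (real (Suc n))" for n
  proof -
    define h where "h = inverse (real (Suc n)) / 2"
    have h: "h > 0" unfolding h_def by simp
    obtain z where z: "z \<in> interior (dom_phi G)" "dist z y < h" using assms h closure_approachable by blast
    obtain w where w: "w \<in> diff_pts G" "dist w z < h" using density[OF z(1) h] by blast
    have "dist w y < inverse (real (Suc n))" using dist_triangle[of w y z] z(2) w(2) unfolding h_def by linarith
    then show ?thesis using w(1) by blast
  qed
  then obtain ys where "\<forall>n. ys n \<in> diff_pts G \<and> dist (ys n) y < inverse (real (Suc n))" by metis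
  then show ?thesis using seq_inv_tendsto by blast
qed


lemma convex_dom: "convex (dom_phi G)"
proof (rule convexI)
  fix a b :: pt and u v :: real
  assume a: "a \<in> dom_phi G" and b: "b \<in> dom_phi G" and uv: "0 \<le> u" "0 \<le> v" "u + v = 1"
  define z where "z = u *\<^sub>R a + v *\<^sub>R b"
  define L where "L = u * (phir G a - fst a * snd a) + v * (phir G b - fst b * snd b) + fst z * snd z"
  have "\<forall>x\<in>G. L \<le> cst x z"
  proof
    fix x assume x: "x \<in> G"
    have v: "v = 1 - u" using uv by simp
    have id: "cst x z - fst z * snd z = u * (cst x a - fst a * snd a) + v * (cst x b - fst b * snd b)"
      unfolding z_def cst_def v by (simp add: algebra_simps)
    have "u * (phir G a - fst a * snd a) \<le> u * (cst x a - fst a * snd a)"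
      using phir_le[OF a x] uv by (intro mult_left_mono) auto
    moreover have "v * (phir G b - fst b * snd b) \<le> v * (cst x b - fst b * snd b)"
      using phir_le[OF b x] uv by (intro mult_left_mono) auto
    ultimately show "L \<le> cst x z" using id unfolding L_def by linarith
  qed
  then show "u *\<^sub>R a + v *\<^sub>R b \<in> dom_phi G" using dom_I(1) unfolding z_def by blast
qed

lemma closure_int: assumes "interior (dom_phi G) \<noteq> {}"
  shows "closure (interior (dom_phi G)) = closure (dom_phi G)"
  by (rule convex_closure_interior[OF convex_dom assms])

lemma rel_frontier_nd: assumes "interior (dom_phi G) \<noteq> {}"
  shows "rel_frontier (dom_phi G) = closure (dom_phi G) - interior (dom_phi G)"
  unfolding rel_frontier_def using rel_interior_nonempty_interior[OF assms] by simp

lemma not_around_E: assumes y: "y \<in> G" and na: "\<not> around y"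
  shows "\<exists>a\<in>G. a \<noteq> y \<and> (fst a = fst y \<or> snd a = snd y)"
proof -
  have "\<not> (\<exists>m\<in>G. fst m < fst y \<and> snd m < snd y) \<or> \<not> (\<exists>p\<in>G. fst y < fst p \<and> snd y < snd p)"
    using na unfolding around_def by blast
  then show ?thesis
  proof
    assume nb: "\<not> (\<exists>m\<in>G. fst m < fst y \<and> snd m < snd y)"
    have "(\<exists>a\<in>G. fst a < fst y) \<or> (\<exists>a\<in>G. snd a < snd y)"
    proof (cases "bdd_below (fst ` G)")
      case True
      then have "\<not> bdd_below (snd ` G)" using not_both_bdd_below by blast
      then show ?thesis using not_bdd_below_ex[of "snd ` G" "snd y"] by force
    next
      case False
      then show ?thesis using not_bdd_below_ex[of "fst ` G" "fst y"] by force
    qed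
    then obtain a where a: "a \<in> G" "fst a < fst y \<or> snd a < snd y" by blast
    then have "fst a \<le> fst y \<and> snd a \<le> snd y" using chain[OF a(1) y] by auto
    then show ?thesis using a nb by (intro bexI[of _ a]) (auto simp: prod_eq_iff)
  next
    assume nb: "\<not> (\<exists>p\<in>G. fst y < fst p \<and> snd y < snd p)"
    have "(\<exists>a\<in>G. fst y < fst a) \<or> (\<exists>a\<in>G. snd y < snd a)"
    proof (cases "bdd_above (fst ` G)")
      case True
      then have "\<not> bdd_above (snd ` G)" using not_both_bdd_above by blast
      then show ?thesis using not_bdd_above_ex[of "snd ` G" "snd y"] by force
    next
      case False
      then show ?thesis using not_bdd_above_ex[of "fst ` G" "fst y"] by force
    qed
    then obtain a where a: "a \<in> G" "fst y < fst a \<or> snd y < snd a" by blast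
    then have "fst y \<le> fst a \<and> snd y \<le> snd a" using chain[OF a(1) y] by auto
    then show ?thesis using a nb by (intro bexI[of _ a]) (auto simp: prod_eq_iff)
  qed
qed

lemma G_E: assumes y: "y \<in> G" and ny: "y \<notin> interior (dom_phi G)" shows "y \<in> E_set G"
proof -
  obtain a where a: "a \<in> G" "a \<noteq> y" "fst a = fst y \<or> snd a = snd y"
    using not_around_E[OF y] ny interior_iff by blast
  show ?thesis
  proof (cases "fst a = fst y")
    case True
    have "y \<in> E_i G 1 (fst y)" "a \<in> E_i G 1 (fst y)" using y a True unfolding E_i_def coord_def by auto
    then have "fst y \<in> T_i G 1" unfolding T_i_def using a(2) by blast
    then show ?thesis unfolding E_set_def using \<open>y \<in> E_i G 1 (fst y)\<close> by blast
  next
    case False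
    then have sa: "snd a = snd y" using a(3) by simp
    have "y \<in> E_i G 2 (snd y)" "a \<in> E_i G 2 (snd y)" using y a sa unfolding E_i_def coord_def by auto
    then have "snd y \<in> T_i G 2" unfolding T_i_def using a(2) by blast
    then show ?thesis unfolding E_set_def using \<open>y \<in> E_i G 2 (snd y)\<close> by blast
  qed
qed

lemma midpoint_around: assumes a: "a \<in> G" and b: "b \<in> G" and lt: "fst a < fst b" "snd a < snd b"
  shows "around ((a + b) /\<^sub>R 2)"
  unfolding around_def using a b lt by (intro bexI[of _ a] bexI[of _ b]) auto

lemma degenerate_line:
  assumes "interior (dom_phi G) = {}"
  shows "\<exists>c. G = {x. fst x = c} \<or> G = {x. snd x = c}"
proof -
  have pair: "fst a = fst b \<or> snd a = snd b" if ab: "a \<in> G" "b \<in> G" for a b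
  proof (rule ccontr)
    assume "\<not> (fst a = fst b \<or> snd a = snd b)"
    then consider "fst a < fst b" "snd a < snd b" | "fst b < fst a" "snd b < snd a"
      using chain[OF ab] by fastforce
    then show False
    proof cases
      case 1 then show False using midpoint_around[OF ab 1] assms interior_iff by blast
    next
      case 2 then show False using midpoint_around[OF ab(2,1) 2] assms interior_iff by blast
    qed
  qed
  obtain x0 where x0: "x0 \<in> G" using nonempty by blast
  have "G \<subseteq> {x. fst x = fst x0} \<or> G \<subseteq> {x. snd x = snd x0}"
  proof (rule ccontr)
    assume "\<not> ?thesis"
    then obtain a b where ab: "a \<in> G" "fst a \<noteq> fst x0" "b \<in> G" "snd b \<noteq> snd x0" by blast
    have "snd a = snd x0" using pair[OF ab(1) x0] ab(2) by simp
    moreover have "fst b = fst x0" using pair[OF ab(3) x0] ab(4) by simp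
    ultimately show False using pair[OF ab(1) ab(3)] ab by simp
  qed
  then show ?thesis
  proof
    assume sub: "G \<subseteq> {x. fst x = fst x0}"
    have "{x. fst x = fst x0} \<subseteq> G"
    proof
      fix p :: pt assume "p \<in> {x. fst x = fst x0}"
      then have "\<forall>x\<in>G. 0 \<le> cst x p" using sub unfolding cst_def by auto
      then show "p \<in> G" by (rule addpt)
    qed
    then show ?thesis using sub by blast
  next
    assume sub: "G \<subseteq> {x. snd x = snd x0}"
    have "{x. snd x = snd x0} \<subseteq> G"
    proof
      fix p :: pt assume "p \<in> {x. snd x = snd x0}"
      then have "\<forall>x\<in>G. 0 \<le> cst x p" using sub unfolding cst_def by auto
      then show "p \<in> G" by (rule addpt)
    qed
    then show ?thesis using sub by blast
  qed
qed

lemma degenerate: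
  assumes "interior (dom_phi G) = {}"
  shows "rel_frontier (dom_phi G) = {}" "udom_Arg G = {}"
proof -
  obtain c where c: "G = {x. fst x = c} \<or> G = {x. snd x = c}" using degenerate_line[OF assms] by blast
  then have "(dom_phi G = {x. fst x = c} \<and> G = {x. fst x = c}) \<or> (dom_phi G = {x. snd x = c} \<and> G = {x. snd x = c})"
  proof
    assume G: "G = {x. fst x = c}"
    have "dom_phi G = {x. fst x = c}"
    proof (intro set_eqI iffI)
      fix p :: pt assume p: "p \<in> dom_phi G"
      show "p \<in> {x. fst x = c}"
      proof (rule ccontr)
        assume "p \<notin> {x. fst x = c}"
        then have k: "c - fst p \<noteq> 0" by simp
        define t where "t = snd p - (\<bar>phir G p\<bar> + 1) / (c - fst p)"
        have "(c, t) \<in> G" using G by simp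
        moreover have "cst (c, t) p = - (\<bar>phir G p\<bar> + 1)" unfolding cst_def t_def using k by simp
        ultimately show False using phir_le[OF p] by fastforce
      qed
    next
      fix p :: pt assume "p \<in> {x. fst x = c}"
      then have "\<forall>x\<in>G. 0 \<le> cst x p" using G unfolding cst_def by auto
      then show "p \<in> dom_phi G" by (rule dom_I)
    qed
    then show ?thesis using G by blast
  next
    assume G: "G = {x. snd x = c}"
    have "dom_phi G = {x. snd x = c}"
    proof (intro set_eqI iffI)
      fix p :: pt assume p: "p \<in> dom_phi G"
      show "p \<in> {x. snd x = c}"
      proof (rule ccontr)
        assume "p \<notin> {x. snd x = c}"
        then have k: "c - snd p \<noteq> 0" by simp
        define t where "t = fst p - (\<bar>phir G p\<bar> + 1) / (c - snd p)"
        have "(t, c) \<in> G" using G by simp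
        moreover have "cst (t, c) p = - (\<bar>phir G p\<bar> + 1)" unfolding cst_def t_def using k by simp
        ultimately show False using phir_le[OF p] by fastforce
      qed
    next
      fix p :: pt assume "p \<in> {x. snd x = c}"
      then have "\<forall>x\<in>G. 0 \<le> cst x p" using G unfolding cst_def by auto
      then show "p \<in> dom_phi G" by (rule dom_I)
    qed
    then show ?thesis using G by blast
  qed
  then have DL: "dom_phi G = {x. fst x = c} \<or> dom_phi G = {x. snd x = c}" by blast
  have a1: "affine {x::pt. fst x = c}" using affine_hyperplane[of "(1::real, 0::real)" c] unfolding inner10 .
  have a2: "affine {x::pt. snd x = c}" using affine_hyperplane[of "(0::real, 1::real)" c] unfolding inner01 .
  have aff: "affine (dom_phi G)" using DL a1 a2 by (elim disjE) simp_all
  show "rel_frontier (dom_phi G) = {}" using aff rel_frontier_eq_empty by blast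
  show "udom_Arg G = {}"
  proof (rule ccontr)
    assume "udom_Arg G \<noteq> {}"
    then obtain y x where A: "Arg G y = {x}" unfolding udom_Arg_def by blast
    then have xA: "x \<in> Arg G y" by auto
    then have yd: "y \<in> dom_phi G" and xG: "x \<in> G" using Arg_dom Arg_G by auto
    have DD: "(dom_phi G = {x. fst x = c} \<and> G = {x. fst x = c}) \<or> (dom_phi G = {x. snd x = c} \<and> G = {x. snd x = c})"
      by fact
    have zero: "cst x' y = 0" if x'G: "x' \<in> G" for x'
    proof -
      from DD consider (v) "dom_phi G = {x. fst x = c}" "G = {x. fst x = c}" | (h) "dom_phi G = {x. snd x = c}" "G = {x. snd x = c}" by blast
      then show ?thesis
      proof cases
        case v
        have "fst y = c" using yd v(1) by blast
        moreover have "fst x' = c" using x'G v(2) by blast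
        ultimately show ?thesis unfolding cst_def by simp
      next
        case h
        have "snd y = c" using yd h(1) by blast
        moreover have "snd x' = c" using x'G h(2) by blast
        ultimately show ?thesis unfolding cst_def by simp
      qed
    qed
    have all: "x' \<in> Arg G y" if "x' \<in> G" for x'
      using Arg_I[OF that] zero[OF that] zero by auto
    have sub: "G \<subseteq> {x}" using all A by blast
    from DD consider (v) "G = {x. fst x = c}" | (h) "G = {x. snd x = c}" by blast
    then show False
    proof cases
      case v
      have "fst x = c" using xG v by blast
      then have "(fst x, snd x + 1) \<in> G" using v by simp
      moreover have "(fst x, snd x + 1) \<noteq> x" by (simp add: prod_eq_iff)
      ultimately show False using sub by blast
    next
      case h
      have "snd x = c" using xG h by blast
      then have "(fst x + 1, snd x) \<in> G" using h by simp
      moreover have "(fst x + 1, snd x) \<noteq> x" by (simp add: prod_eq_iff)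
      ultimately show False using sub by blast
    qed
  qed
qed

end

lemma xof_diff: "norm (xof w g - xof y D) \<le> 2 * norm (w - y) + 2 * norm (g - D)"
proof -
  have e: "xof w g - xof y D = (fst (w - y) - snd (g - D), snd (w - y) - fst (g - D))"
    unfolding xof_def by simp
  have "norm (xof w g - xof y D) \<le> \<bar>fst (w - y) - snd (g - D)\<bar> + \<bar>snd (w - y) - fst (g - D)\<bar>"
    using norm_le_abs[of "xof w g - xof y D"] unfolding e by simp
  also have "\<dots> \<le> 2 * norm (w - y) + 2 * norm (g - D)"
    using fst_abs_le_norm[of "w - y"] snd_abs_le_norm[of "w - y"] fst_abs_le_norm[of "g - D"] snd_abs_le_norm[of "g - D"]
    by linarith
  finally show ?thesis .
qed

context MM begin

lemma seq_eps:
  assumes H: "\<forall>ys. (\<forall>n. ys n \<in> diff_pts G) \<and> ys \<longlonglongrightarrow> y \<longrightarrow> (\<lambda>n. cgrad G (ys n)) \<longlonglongrightarrow> D"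
    and eta: "\<eta> > 0"
  shows "\<exists>\<delta>>0. \<forall>w\<in>diff_pts G. dist w y < \<delta> \<longrightarrow> dist (cgrad G w) D < \<eta>"
proof (rule ccontr)
  assume "\<not> ?thesis"
  then have "\<forall>\<delta>>0. \<exists>w\<in>diff_pts G. dist w y < \<delta> \<and> \<not> dist (cgrad G w) D < \<eta>" by blast
  then have "\<forall>n. \<exists>w. w \<in> diff_pts G \<and> dist w y < inverse (real (Suc n)) \<and> \<not> dist (cgrad G w) D < \<eta>"
    by (meson inverse_positive_iff_positive of_nat_0_less_iff zero_less_Suc)
  then obtain ys where ys: "\<forall>n. ys n \<in> diff_pts G \<and> dist (ys n) y < inverse (real (Suc n)) \<and> \<not> dist (cgrad G (ys n)) D < \<eta>"
    by metis
  have "ys \<longlonglongrightarrow> y" using ys seq_inv_tendsto by blast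
  then have "(\<lambda>n. cgrad G (ys n)) \<longlonglongrightarrow> D" using H ys by blast
  then have "eventually (\<lambda>n. dist (cgrad G (ys n)) D < \<eta>) sequentially" using tendstoD eta by blast
  then obtain N where "\<forall>n\<ge>N. dist (cgrad G (ys n)) D < \<eta>" unfolding eventually_sequentially by blast
  then show False using ys by blast
qed

lemma xbar_Arg:
  assumes nd: "interior (dom_phi G) \<noteq> {}" and yc: "y \<in> closure (dom_phi G)"
    and H: "\<forall>ys. (\<forall>n. ys n \<in> diff_pts G) \<and> ys \<longlonglongrightarrow> y \<longrightarrow> (\<lambda>n. cgrad G (ys n)) \<longlonglongrightarrow> D"
  shows "xof y D \<in> Arg G y"
proof -
  have "y \<in> closure (interior (dom_phi G))" using yc closure_int[OF nd] by simp
  then obtain ys where ys: "\<forall>n. ys n \<in> diff_pts G" "ys \<longlonglongrightarrow> y" using diff_seq by blast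
  have cg: "(\<lambda>n. cgrad G (ys n)) \<longlonglongrightarrow> D" using H ys by blast
  define xs where "xs n = xof (ys n) (cgrad G (ys n))" for n
  have xsA: "xs n \<in> Arg G (ys n)" for n unfolding xs_def using diff_pts_Arg(1)[of "ys n"] ys(1) by auto
  have xsl: "xs \<longlonglongrightarrow> xof y D" unfolding xs_def xof_def
    by (intro tendsto_intros ys(2) cg)
  have xbG: "xof y D \<in> G" using closed_sequentially[OF closedG _ xsl] Arg_G[OF xsA] by blast
  have "\<forall>x'\<in>G. cst (xof y D) y \<le> cst x' y"
  proof
    fix x' assume x': "x' \<in> G"
    have l1: "(\<lambda>n. cst (xs n) (ys n)) \<longlonglongrightarrow> cst (xof y D) y" unfolding cst_def
      by (intro tendsto_intros xsl ys(2))
    have l2: "(\<lambda>n. cst x' (ys n)) \<longlonglongrightarrow> cst x' y" unfolding cst_def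
      by (intro tendsto_intros ys(2))
    show "cst (xof y D) y \<le> cst x' y"
      by (rule LIMSEQ_le[OF l1 l2]) (use Arg_min[OF xsA x'] in auto)
  qed
  then show ?thesis using Arg_I xbG by blast
qed

lemma ell_affine:
  assumes a: "a \<in> Arg G y" and b: "b \<in> Arg G y"
  shows "cst a w - cst b w = inner (w - y) (gc a y - gc b y)"
proof -
  have "cst a y = cst b y" using Arg_phir[OF a] Arg_phir[OF b] by simp
  then show ?thesis using cst_expand[of a w y] cst_expand[of b w y] by (simp add: inner_diff_right)
qed

lemma LP:
  assumes yc: "y \<in> closure (dom_phi G)"
    and eps: "\<forall>\<eta>>0. \<exists>\<delta>>0. \<forall>w\<in>diff_pts G. dist w y < \<delta> \<longrightarrow> dist (cgrad G w) D < \<eta>"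
    and xb: "xof y D \<in> Arg G y" and x': "x' \<in> Arg G y" and z: "z \<in> interior (dom_phi G)"
  shows "0 \<le> cst x' z - cst (xof y D) z"
proof (rule ccontr)
  define xb where "xb = xof y D"
  define g where "g = gc x' y - gc xb y"
  have ell: "cst x' w - cst xb w = inner (w - y) g" for w unfolding g_def xb_def by (rule ell_affine[OF x' xb])
  assume "\<not> 0 \<le> cst x' z - cst (xof y D) z"
  then have neg: "inner (z - y) g < 0" using ell[of z] unfolding xb_def by simp
  define \<kappa> where "\<kappa> = - inner (z - y) g"
  have k0: "\<kappa> > 0" unfolding \<kappa>_def using neg by simp
  have zy: "z \<noteq> y" using neg by auto
  define v where "v = z - y"
  define V where "V = norm v + 1"
  define Gg where "Gg = norm g + 1"
  have V1: "V \<ge> 1" and G1: "Gg \<ge> 1" unfolding V_def Gg_def by auto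
  define \<rho> where "\<rho> = min 1 (\<kappa> / (4 * Gg))"
  have rho: "\<rho> > 0" "\<rho> \<le> 1" "\<rho> * Gg \<le> \<kappa> / 4" unfolding \<rho>_def using k0 G1
    by (auto simp: min_def field_simps)
  define \<eta> where "\<eta> = \<kappa> / (8 * V)"
  have eta: "\<eta> > 0" "2 * V * \<eta> = \<kappa> / 4" unfolding \<eta>_def using k0 V1 by (auto simp: field_simps)
  obtain \<delta> where dl: "\<delta> > 0" "\<forall>w\<in>diff_pts G. dist w y < \<delta> \<longrightarrow> dist (cgrad G w) D < \<eta>"
    using eps eta(1) by blast
  define t where "t = min (1/2) (min (\<kappa> / (8 * V * V)) (\<delta> / (2 * V)))"
  have t: "t > 0" "t < 1" "2 * t * V * V \<le> \<kappa> / 4" "t * V \<le> \<delta> / 2"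
  proof -
    show "t > 0" unfolding t_def using k0 V1 dl by auto
    show "t < 1" unfolding t_def by auto
    have "t \<le> \<kappa> / (8 * V * V)" unfolding t_def by auto
    then have "t * (8 * V * V) \<le> \<kappa>" using V1 by (simp add: field_simps)
    then show "2 * t * V * V \<le> \<kappa> / 4" by (simp add: algebra_simps)
    have "t \<le> \<delta> / (2 * V)" unfolding t_def by auto
    then have "t * (2 * V) \<le> \<delta>" using V1 by (simp add: field_simps)
    then show "t * V \<le> \<delta> / 2" by simp
  qed
  define p where "p = (1 - (1 - t)) *\<^sub>R z + (1 - t) *\<^sub>R y"
  have "p \<in> open_segment z y" unfolding p_def in_segment using zy t by (intro conjI exI[of _ "1 - t"]) auto
  then have pint: "p \<in> interior (dom_phi G)"
    using in_interior_closure_convex_segment[OF convex_dom z yc] by blast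
  have py: "p - y = t *\<^sub>R v" unfolding p_def v_def by (simp add: algebra_simps)
  have rt: "\<rho> * t > 0" using rho t by simp
  obtain w where w: "w \<in> diff_pts G" "dist w p < \<rho> * t" using density[OF pint rt] by blast
  have wp: "norm (w - p) < \<rho> * t" using w(2) by (simp add: dist_norm)
  have "norm (w - y) \<le> norm (w - p) + norm (p - y)" using norm_triangle_ineq[of "w - p" "p - y"] by simp
  also have "norm (p - y) = t * norm v" unfolding py using t by simp
  finally have "norm (w - y) < \<rho> * t + t * norm v" using wp by linarith
  moreover have "\<rho> * t \<le> t" using rho t by simp
  ultimately have wy: "norm (w - y) \<le> t * V" unfolding V_def by (simp add: algebra_simps)
  have "dist w y < \<delta>" using wy t dl(1) by (simp add: dist_norm)
  then have cgD: "norm (cgrad G w - D) < \<eta>" using dl(2) w(1) by (simp add: dist_norm)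
  define xw where "xw = xof w (cgrad G w)"
  have xwA: "xw \<in> Arg G w" unfolding xw_def using diff_pts_Arg(1)[OF w(1)] by simp
  have "inner (w - y) g = inner (p - y) g + inner (w - p) g" by (simp add: inner_diff_left)
  also have "inner (p - y) g = - t * \<kappa>" unfolding py \<kappa>_def v_def by simp
  finally have e1: "inner (w - y) g = - t * \<kappa> + inner (w - p) g" .
  have "inner (w - p) g \<le> norm (w - p) * norm g" using Cauchy_Schwarz_ineq2[of "w - p" g] by linarith
  also have "\<dots> \<le> (\<rho> * t) * Gg" unfolding Gg_def using wp rt by (intro mult_mono) auto
  also have "\<dots> = t * (\<rho> * Gg)" by simp
  also have "\<dots> \<le> t * (\<kappa> / 4)" using rho t by (intro mult_left_mono) auto
  finally have up: "inner (w - y) g \<le> - t * \<kappa> + t * (\<kappa> / 4)" using e1 by linarith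
  have xwG: "xw \<in> G" using Arg_G[OF xwA] .
  have "cst xw w \<le> cst x' w" using Arg_min[OF xwA Arg_G[OF x']] .
  then have "inner (w - y) g \<ge> cst xw w - cst xb w" using ell[of w] by linarith
  moreover have "cst xw w - cst xb w = (cst xw y - cst xb y) + inner (w - y) (gc xw y - gc xb y)"
    using cst_expand[of xw w y] cst_expand[of xb w y] by (simp add: inner_diff_right)
  moreover have "cst xb y \<le> cst xw y" using Arg_min[OF xb[folded xb_def] xwG] .
  moreover have "\<bar>inner (w - y) (gc xw y - gc xb y)\<bar> \<le> norm (w - y) * norm (xw - xb)"
    using Cauchy_Schwarz_ineq2[of "w - y" "gc xw y - gc xb y"] gc_diff_norm by simp
  ultimately have lo1: "inner (w - y) g \<ge> - (norm (w - y) * norm (xw - xb))" by linarith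
  have nx: "norm (xw - xb) \<le> 2 * (t * V) + 2 * \<eta>"
    using xof_diff[of w "cgrad G w" y D] wy cgD unfolding xw_def xb_def by linarith
  have "norm (w - y) * norm (xw - xb) \<le> (t * V) * (2 * (t * V) + 2 * \<eta>)"
    using wy nx t V1 by (intro mult_mono) auto
  also have "\<dots> = t * (2 * t * V * V + 2 * V * \<eta>)" by (simp add: algebra_simps)
  also have "\<dots> \<le> t * (\<kappa> / 4 + \<kappa> / 4)" using t eta by (intro mult_left_mono) auto
  finally have lo: "inner (w - y) g \<ge> - (t * (\<kappa> / 4 + \<kappa> / 4))" using lo1 by linarith
  have "t * \<kappa> > 0" using t k0 by simp
  then show False using up lo by (simp add: algebra_simps)
qed


lemma bd_G:
  assumes yc: "y \<in> closure (dom_phi G)"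
    and eps: "\<forall>\<eta>>0. \<exists>\<delta>>0. \<forall>w\<in>diff_pts G. dist w y < \<delta> \<longrightarrow> dist (cgrad G w) D < \<eta>"
    and xb: "xof y D \<in> Arg G y" and x': "x' \<in> Arg G y" and ne: "x' \<noteq> xof y D"
  shows "y \<in> G"
proof -
  define b where "b = xof y D"
  have bA: "b \<in> Arg G y" using xb unfolding b_def .
  have bG: "b \<in> G" and x'G: "x' \<in> G" using Arg_G bA x' by auto
  have eq: "cst b y = cst x' y" using Arg_phir[OF bA] Arg_phir[OF x'] by simp
  have zero: "cst b y = 0"
  proof -
    consider "fst b = fst x'" | "snd b = snd x'" | "fst b < fst x'" "snd b < snd x'" | "fst x' < fst b" "snd x' < snd b"
      using chain[OF bG x'G] by fastforce
    then show ?thesis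
    proof cases
      case 1
      then have "snd b \<noteq> snd x'" using ne unfolding b_def by (auto simp: prod_eq_iff)
      moreover have "(fst b - fst y) * (snd b - snd x') = 0" using eq 1 unfolding cst_def by (simp add: algebra_simps)
      ultimately have "fst b = fst y" by simp
      then show ?thesis unfolding cst_def by simp
    next
      case 2
      then have "fst b \<noteq> fst x'" using ne unfolding b_def by (auto simp: prod_eq_iff)
      moreover have "(snd b - snd y) * (fst b - fst x') = 0" using eq 2 unfolding cst_def by (simp add: algebra_simps)
      ultimately have "snd b = snd y" by simp
      then show ?thesis unfolding cst_def by simp
    next
      case 3
      define e where "e = min (fst x' - fst b) (snd x' - snd b) / 3"
      have e: "e > 0" "fst x' - fst b - e > e" "snd x' - snd b - e > e" unfolding e_def using 3 by (auto simp: min_def)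
      define w where "w = (fst x' - e, snd x' - e)"
      have "around w" unfolding around_def w_def using bG x'G e by (intro bexI[of _ b] bexI[of _ x']) auto
      then have wi: "w \<in> interior (dom_phi G)" using interior_iff by blast
      have "0 \<le> cst x' w - cst b w" using LP[OF yc eps xb x' wi] unfolding b_def .
      moreover have "cst x' w = e * e" unfolding cst_def w_def by simp
      moreover have "cst b w = (fst x' - fst b - e) * (snd x' - snd b - e)" unfolding cst_def w_def by (simp add: algebra_simps)
      moreover have "e * e < (fst x' - fst b - e) * (snd x' - snd b - e)" using e by (intro mult_strict_mono) auto
      ultimately show ?thesis by linarith
    next
      case 4
      define e where "e = min (fst b - fst x') (snd b - snd x') / 3"
      have e: "e > 0" "fst b - fst x' - e > e" "snd b - snd x' - e > e" unfolding e_def using 4 by (auto simp: min_def)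
      define w where "w = (fst x' + e, snd x' + e)"
      have "around w" unfolding around_def w_def using bG x'G e by (intro bexI[of _ x'] bexI[of _ b]) auto
      then have wi: "w \<in> interior (dom_phi G)" using interior_iff by blast
      have "0 \<le> cst x' w - cst b w" using LP[OF yc eps xb x' wi] unfolding b_def .
      moreover have "cst x' w = e * e" unfolding cst_def w_def by simp
      moreover have "cst b w = (fst b - fst x' - e) * (snd b - snd x' - e)" unfolding cst_def w_def by (simp add: algebra_simps)
      moreover have "e * e < (fst b - fst x' - e) * (snd b - snd x' - e)" using e by (intro mult_strict_mono) auto
      ultimately show ?thesis by linarith
    qed
  qed
  have "\<forall>x\<in>G. 0 \<le> cst x y"
  proof
    fix x assume "x \<in> G"
    then have "cst b y \<le> cst x y" using Arg_min[OF bA] by blast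
    then show "0 \<le> cst x y" using zero by simp
  qed
  then show ?thesis by (rule addpt)
qed

lemma int_grad_Arg:
  assumes y: "y \<in> interior (dom_phi G)" and D: "GDERIV (phir G) y :> D"
  shows "Arg G y = {xof y D}"
proof -
  obtain x where x: "x \<in> Arg G y" using Arg_exists[OF y] by blast
  have *: "\<forall>x'\<in>Arg G y. x' = xof y D" using fermat[OF y D] by auto
  then have "Arg G y \<subseteq> {xof y D}" by blast
  moreover have "xof y D \<in> Arg G y" using x * by metis
  ultimately show ?thesis by blast
qed

lemma grad_props:
  assumes nd: "interior (dom_phi G) \<noteq> {}" and hg: "has_grad G y D"
  shows "(y \<in> interior (dom_phi G) \<and> Arg G y = {xof y D}) \<or>
         (y \<in> rel_frontier (dom_phi G) \<and> y \<notin> interior (dom_phi G) \<and> xof y D \<in> Arg G y \<and> (\<forall>x'\<in>Arg G y. x' \<noteq> xof y D \<longrightarrow> y \<in> G))"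
  using hg unfolding has_grad_def
proof
  assume "y \<in> interior (dom_phi G) \<and> GDERIV (phir G) y :> D"
  then show ?thesis using int_grad_Arg by blast
next
  assume a: "y \<in> rel_frontier (dom_phi G) \<and> y \<in> dom_phi G \<and>
       (\<forall>ys. (\<forall>n. ys n \<in> diff_pts G) \<and> ys \<longlonglongrightarrow> y \<longrightarrow> (\<lambda>n. cgrad G (ys n)) \<longlonglongrightarrow> D)"
  have yc: "y \<in> closure (dom_phi G)" and ni: "y \<notin> interior (dom_phi G)"
    using a rel_frontier_nd[OF nd] by auto
  have xb: "xof y D \<in> Arg G y" using xbar_Arg[OF nd yc] a by blast
  have eps: "\<forall>\<eta>>0. \<exists>\<delta>>0. \<forall>w\<in>diff_pts G. dist w y < \<delta> \<longrightarrow> dist (cgrad G w) D < \<eta>"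
    using seq_eps a by blast
  show ?thesis using a ni xb bd_G[OF yc eps xb] by blast
qed

lemma T1: "dom_grad G - udom_Arg G \<subseteq> rel_frontier (dom_phi G) \<inter> G"
proof
  fix y assume y: "y \<in> dom_grad G - udom_Arg G"
  then obtain D where hg: "has_grad G y D" unfolding dom_grad_def by blast
  have nu: "\<not> (\<exists>x. Arg G y = {x})" using y unfolding udom_Arg_def by blast
  show "y \<in> rel_frontier (dom_phi G) \<inter> G"
  proof (cases "interior (dom_phi G) = {}")
    case True
    then show ?thesis using hg degenerate(1)[OF True] unfolding has_grad_def by blast
  next
    case False
    from grad_props[OF False hg] nu show ?thesis by blast
  qed
qed

lemma T7:
  assumes y: "y \<in> dom_grad G" and A: "Arg G y = {x}"
  shows "grad G y = gc x y"
proof -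
  obtain D0 where D0: "has_grad G y D0" using y unfolding dom_grad_def by blast
  have nd: "interior (dom_phi G) \<noteq> {}"
    using D0 degenerate(1) unfolding has_grad_def by blast
  have all: "D = gc x y" if "has_grad G y D" for D
  proof -
    have "xof y D = x" using grad_props[OF nd that] A by blast
    then show ?thesis using gc_xof[of y D] by simp
  qed
  have "has_grad G y (grad G y)" unfolding grad_def using D0 by (rule someI)
  then show ?thesis using all by blast
qed

end

definition lesc :: "pt set \<Rightarrow> pt \<Rightarrow> bool" where
  "lesc G y \<longleftrightarrow> (\<forall>K \<delta>. \<delta> > 0 \<longrightarrow> (\<exists>w\<in>interior (dom_phi G). dist w y < \<delta> \<and> (\<exists>x\<in>Arg G w. fst x + snd x < - K)))"
definition uesc :: "pt set \<Rightarrow> pt \<Rightarrow> bool" where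
  "uesc G y \<longleftrightarrow> (\<forall>K \<delta>. \<delta> > 0 \<longrightarrow> (\<exists>w\<in>interior (dom_phi G). dist w y < \<delta> \<and> (\<exists>x\<in>Arg G w. K < fst x + snd x)))"
definition low2 :: "pt set \<Rightarrow> real \<Rightarrow> bool" where
  "low2 G b \<longleftrightarrow> (\<forall>x\<in>G. b \<le> snd x) \<and> (\<forall>e>0. \<exists>x\<in>G. snd x < b + e)"

lemma cst_cont: assumes "\<eta> > 0" shows "\<exists>\<delta>>0. \<delta> \<le> 1 \<and> (\<forall>w. dist w y < \<delta> \<longrightarrow> \<bar>cst a w - cst a y\<bar> < \<eta>)"
proof -
  define L where "L = 2 * norm a + 2 * norm y + 1"
  have L: "L > 0" unfolding L_def using norm_ge_zero[of a] norm_ge_zero[of y] by linarith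
  define \<delta> where "\<delta> = min 1 (\<eta> / (2 * L))"
  have d: "\<delta> > 0" "\<delta> \<le> 1" unfolding \<delta>_def using assms L by auto
  have "\<bar>cst a w - cst a y\<bar> < \<eta>" if w: "dist w y < \<delta>" for w
  proof -
    have "\<bar>cst a w - cst a y\<bar> \<le> L * dist w y" using cst_lip[of w y a] w d unfolding L_def by simp
    also have "\<dots> \<le> L * (\<eta> / (2 * L))" using w L unfolding \<delta>_def by (intro mult_left_mono) auto
    also have "\<dots> = \<eta> / 2" using L by simp
    finally show ?thesis using assms by linarith
  qed
  then show ?thesis using d by blast
qed

context MM begin

lemma sum_unb_below: "\<exists>z\<in>G. fst z + snd z < m"
proof -
  obtain x0 where x0: "x0 \<in> G" using nonempty by blast
  show ?thesis
  proof (cases "bdd_below (fst ` G)")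
    case True
    then have nsb: "\<not> bdd_below (snd ` G)" using not_both_bdd_below by blast
    obtain v where "v \<in> snd ` G" "v < min (snd x0) (m - fst x0 - 1)" using not_bdd_below_ex[OF nsb, of "min (snd x0) (m - fst x0 - 1)"] by auto
    then obtain a where a: "a \<in> G" "snd a < snd x0" "snd a < m - fst x0 - 1" by auto
    then have "fst a \<le> fst x0" using chain[OF a(1) x0] by auto
    then show ?thesis using a by (intro bexI[of _ a]) auto
  next
    case False
    obtain v where "v \<in> fst ` G" "v < min (fst x0) (m - snd x0 - 1)" using not_bdd_below_ex[OF False, of "min (fst x0) (m - snd x0 - 1)"] by auto
    then obtain a where a: "a \<in> G" "fst a < fst x0" "fst a < m - snd x0 - 1" by auto
    then have "snd a \<le> snd x0" using chain[OF a(1) x0] by auto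
    then show ?thesis using a by (intro bexI[of _ a]) auto
  qed
qed

lemma sum_unb_above: "\<exists>z\<in>G. m < fst z + snd z"
proof -
  obtain x0 where x0: "x0 \<in> G" using nonempty by blast
  show ?thesis
  proof (cases "bdd_above (fst ` G)")
    case True
    then have nsb: "\<not> bdd_above (snd ` G)" using not_both_bdd_above by blast
    obtain v where "v \<in> snd ` G" "max (snd x0) (m - fst x0 + 1) < v" using not_bdd_above_ex[OF nsb, of "max (snd x0) (m - fst x0 + 1)"] by auto
    then obtain a where a: "a \<in> G" "snd x0 < snd a" "m - fst x0 + 1 < snd a" by auto
    then have "fst x0 \<le> fst a" using chain[OF a(1) x0] by auto
    then show ?thesis using a by (intro bexI[of _ a]) auto
  next
    case False
    obtain v where "v \<in> fst ` G" "max (fst x0) (m - snd x0 + 1) < v" using not_bdd_above_ex[OF False, of "max (fst x0) (m - snd x0 + 1)"] by auto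
    then obtain a where a: "a \<in> G" "fst x0 < fst a" "m - snd x0 + 1 < fst a" by auto
    then have "snd x0 \<le> snd a" using chain[OF a(1) x0] by auto
    then show ?thesis using a by (intro bexI[of _ a]) auto
  qed
qed

lemma sum_bound: "\<exists>R. \<forall>x\<in>G. \<bar>fst x + snd x\<bar> \<le> K \<longrightarrow> norm x \<le> R"
proof -
  obtain zm where zm: "zm \<in> G" "fst zm + snd zm < - K" using sum_unb_below by blast
  obtain zp where zp: "zp \<in> G" "K < fst zp + snd zp" using sum_unb_above by blast
  have "norm x \<le> (\<bar>fst zm\<bar> + \<bar>fst zp\<bar>) + (\<bar>snd zm\<bar> + \<bar>snd zp\<bar>)" if x: "x \<in> G" "\<bar>fst x + snd x\<bar> \<le> K" for x
  proof -
    have "fst zm \<le> fst x \<and> snd zm \<le> snd x" using chain[OF x(1) zm(1)] x(2) zm(2) by auto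
    moreover have "fst x \<le> fst zp \<and> snd x \<le> snd zp" using chain[OF x(1) zp(1)] x(2) zp(2) by auto
    ultimately have "\<bar>fst x\<bar> + \<bar>snd x\<bar> \<le> (\<bar>fst zm\<bar> + \<bar>fst zp\<bar>) + (\<bar>snd zm\<bar> + \<bar>snd zp\<bar>)" by linarith
    then show ?thesis using norm_le_abs[of x] by linarith
  qed
  then show ?thesis by blast
qed

lemma gc_diff2: "norm (gc a w - gc b y) \<le> 2 * norm (w - y) + 2 * norm (a - b)"
proof -
  have e: "gc a w - gc b y = (snd (w - y) - snd (a - b), fst (w - y) - fst (a - b))"
    unfolding gc_def by simp
  have "norm (gc a w - gc b y) \<le> \<bar>snd (w - y) - snd (a - b)\<bar> + \<bar>fst (w - y) - fst (a - b)\<bar>"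
    using norm_le_abs[of "gc a w - gc b y"] unfolding e by simp
  also have "\<dots> \<le> 2 * norm (w - y) + 2 * norm (a - b)"
    using fst_abs_le_norm[of "w - y"] snd_abs_le_norm[of "w - y"] fst_abs_le_norm[of "a - b"] snd_abs_le_norm[of "a - b"]
    by linarith
  finally show ?thesis .
qed

lemma E1:
  assumes nd: "interior (dom_phi G) \<noteq> {}" and y: "y \<in> udom_Arg G - dom_grad G"
  shows "y \<in> dom_phi G \<and> y \<in> rel_frontier (dom_phi G) \<and> (\<exists>x. Arg G y = {x}) \<and> (lesc G y \<or> uesc G y)"
proof -
  obtain x where A: "Arg G y = {x}" using y unfolding udom_Arg_def by blast
  have xA: "x \<in> Arg G y" using A by auto
  have yd: "y \<in> dom_phi G" using Arg_dom[OF xA] .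
  have ni: "y \<notin> interior (dom_phi G)"
  proof
    assume yi: "y \<in> interior (dom_phi G)"
    have "has_grad G y (gc x y)" unfolding has_grad_def using DU[OF yi A] yi by blast
    then show False using y yd unfolding dom_grad_def by blast
  qed
  have yf: "y \<in> rel_frontier (dom_phi G)" using rel_frontier_nd[OF nd] yd ni closure_subset by blast
  have "lesc G y \<or> uesc G y"
  proof (rule ccontr)
    assume nlu: "\<not> (lesc G y \<or> uesc G y)"
    then have "\<not> lesc G y" by blast
    then obtain K1 d1 where d1: "d1 > 0" "\<forall>w\<in>interior (dom_phi G). dist w y < d1 \<longrightarrow> (\<forall>x\<in>Arg G w. \<not> fst x + snd x < - K1)"
      unfolding lesc_def by blast
    have "\<not> uesc G y" using nlu by blast
    then obtain K2 d2 where d2: "d2 > 0" "\<forall>w\<in>interior (dom_phi G). dist w y < d2 \<longrightarrow> (\<forall>x\<in>Arg G w. \<not> K2 < fst x + snd x)"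
      unfolding uesc_def by blast
    obtain R where R: "\<forall>x\<in>G. \<bar>fst x + snd x\<bar> \<le> max K1 K2 \<longrightarrow> norm x \<le> R" using sum_bound by blast
    have "has_grad G y (gc x y)" unfolding has_grad_def
    proof (intro disjI2 conjI yf yd allI impI)
      fix ys assume ys: "(\<forall>n. ys n \<in> diff_pts G) \<and> ys \<longlonglongrightarrow> y"
      show "(\<lambda>n. cgrad G (ys n)) \<longlonglongrightarrow> gc x y"
        unfolding lim_sequentially
      proof (intro allI impI)
        fix r :: real assume r: "r > 0"
        obtain d3 where d3: "d3 > 0" "\<forall>w x'. dist w y < d3 \<longrightarrow> x' \<in> Arg G w \<longrightarrow> norm x' \<le> R \<longrightarrow> norm (x' - x) < r / 8"
          using NF[OF A, of "r/8" R] r by auto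
        define d where "d = min (min d1 d2) (min d3 (r / 8))"
        have d0: "d > 0" unfolding d_def using d1 d2 d3 r by simp
        obtain N where N: "\<forall>n\<ge>N. dist (ys n) y < d" using ys d0 unfolding lim_sequentially by blast
        have "dist (cgrad G (ys n)) (gc x y) < r" if n: "n \<ge> N" for n
        proof -
          define w where "w = ys n"
          have wd: "w \<in> diff_pts G" using ys unfolding w_def by blast
          have wi: "w \<in> interior (dom_phi G)" using wd unfolding diff_pts_def by blast
          have dw: "dist w y < d" using N n unfolding w_def by blast
          define xw where "xw = xof w (cgrad G w)"
          have xwA: "xw \<in> Arg G w" unfolding xw_def using diff_pts_Arg(1)[OF wd] by simp
          have "dist w y < d1" "dist w y < d2" using dw unfolding d_def by auto
          then have "\<not> fst xw + snd xw < - K1" "\<not> K2 < fst xw + snd xw" using d1(2) d2(2) wi xwA by blast+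
          then have "\<bar>fst xw + snd xw\<bar> \<le> max K1 K2" by linarith
          then have "norm xw \<le> R" using R Arg_G[OF xwA] by blast
          moreover have "dist w y < d3" using dw unfolding d_def by simp
          ultimately have nx: "norm (xw - x) < r / 8" using d3(2) xwA by blast
          have cg: "cgrad G w = gc xw w" unfolding xw_def by simp
          have "norm (gc xw w - gc x y) \<le> 2 * norm (w - y) + 2 * norm (xw - x)" by (rule gc_diff2)
          moreover have "norm (w - y) < r / 8" using dw unfolding d_def by (simp add: dist_norm)
          ultimately have "norm (gc xw w - gc x y) < r" using nx r by linarith
          then show ?thesis unfolding w_def[symmetric] cg by (simp add: dist_norm)
        qed
        then show "\<exists>no. \<forall>n\<ge>no. dist (cgrad G (ys n)) (gc x y) < r" by blast
      qed
    qed
    then show False using y yd unfolding dom_grad_def by blast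
  qed
  then show ?thesis using yd yf A by blast
qed

lemma L0:
  assumes le: "lesc G y" and A: "Arg G y = {x}"
  shows "bdd_below (fst ` G) \<or> bdd_below (snd ` G)"
proof (rule ccontr)
  assume "\<not> ?thesis"
  then have nf: "\<not> bdd_below (fst ` G)" and ns: "\<not> bdd_below (snd ` G)" by auto
  have xA: "x \<in> Arg G y" using A by auto
  have xG: "x \<in> G" using Arg_G[OF xA] .
  define T where "T = \<bar>cst x y\<bar> + 3"
  obtain a where a: "a \<in> G" "fst a < fst y - T" using not_bdd_below_ex[OF nf, of "fst y - T"] by auto
  obtain b where b: "b \<in> G" "snd b < snd y - T" using not_bdd_below_ex[OF ns, of "snd y - T"] by auto
  obtain z where z: "z \<in> G" "fst z \<le> fst a" "snd z \<le> snd b" using chain_min[OF a(1) b(1)] by blast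
  obtain \<delta> where dl: "\<delta> > 0" "\<delta> \<le> 1" "\<forall>w. dist w y < \<delta> \<longrightarrow> \<bar>cst x w - cst x y\<bar> < 1"
    using cst_cont[of 1 y x] by auto
  obtain w xw where w: "w \<in> interior (dom_phi G)" "dist w y < \<delta>" and xw: "xw \<in> Arg G w" "fst xw + snd xw < fst z + snd z"
    using le dl(1) unfolding lesc_def by (metis minus_minus)
  have xwz: "fst xw \<le> fst z \<and> snd xw \<le> snd z" using chain[OF Arg_G[OF xw(1)] z(1)] xw(2) by auto
  have w1: "\<bar>fst w - fst y\<bar> < 1" "\<bar>snd w - snd y\<bar> < 1"
    using abs_fst_le[of w y] abs_snd_le[of w y] w(2) dl(2) by linarith+
  have p1: "fst w - fst xw \<ge> T - 1" and p2: "snd w - snd xw \<ge> T - 1"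
    using xwz z a b w1 unfolding abs_less_iff by linarith+
  have T1: "T - 1 \<ge> 1" unfolding T_def by simp
  have "(T - 1) * (T - 1) \<le> (fst w - fst xw) * (snd w - snd xw)"
    using p1 p2 T1 by (intro mult_mono) auto
  moreover have "T - 1 \<le> (T - 1) * (T - 1)" using mult_left_mono[of 1 "T - 1" "T - 1"] T1 by simp
  moreover have "cst xw w = (fst w - fst xw) * (snd w - snd xw)" unfolding cst_def by (simp add: algebra_simps)
  moreover have "cst xw w \<le> cst x w" using Arg_min[OF xw(1) xG] .
  moreover have "cst x w < cst x y + 1" using dl(3) w(2) by fastforce
  moreover have "cst x y + 1 \<le> T - 1" unfolding T_def using abs_ge_self[of "cst x y"] by linarith
  ultimately show False by linarith
qed

lemma low2_Inf: assumes bb: "bdd_below (snd ` G)" shows "low2 G (Inf (snd ` G))"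
  unfolding low2_def
proof (intro conjI ballI allI impI)
  fix x assume "x \<in> G" then show "Inf (snd ` G) \<le> snd x" using bb by (auto intro: cInf_lower)
next
  fix e :: real assume e: "e > 0"
  have ne: "snd ` G \<noteq> {}" using nonempty by blast
  have "Inf (snd ` G) < Inf (snd ` G) + e" using e by simp
  then have "\<exists>v\<in>snd ` G. v < Inf (snd ` G) + e" using cInf_less_iff[OF ne bb] by blast
  then show "\<exists>x\<in>G. snd x < Inf (snd ` G) + e" by auto
qed

lemma low2_lb: "low2 G b \<Longrightarrow> x \<in> G \<Longrightarrow> b \<le> snd x"
  unfolding low2_def by blast

lemma low2_approx: "low2 G b \<Longrightarrow> e > 0 \<Longrightarrow> \<exists>x\<in>G. snd x < b + e"
  unfolding low2_def by blast

lemma low2_unique: assumes l: "low2 G b" "low2 G b'" shows "b = b'"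
proof (rule ccontr)
  assume ne: "b \<noteq> b'"
  show False
  proof (cases "b < b'")
    case True
    obtain x where x: "x \<in> G" "snd x < b + (b' - b)" using low2_approx[OF l(1), of "b' - b"] True by auto
    then show False using low2_lb[OF l(2) x(1)] by simp
  next
    case False
    then have "b' < b" using ne by simp
    then obtain x where x: "x \<in> G" "snd x < b' + (b - b')" using low2_approx[OF l(2), of "b - b'"] by auto
    then show False using low2_lb[OF l(1) x(1)] by simp
  qed
qed

lemma low2_fst_unb: assumes l: "low2 G b" shows "\<not> bdd_below (fst ` G)"
proof -
  have "bdd_below (snd ` G)" unfolding bdd_below_def using low2_lb[OF l] by blast
  then show ?thesis using not_both_bdd_below by blast
qed

lemma dom_low2: assumes l: "low2 G b" and yd: "y \<in> dom_phi G" shows "b \<le> snd y"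
proof (rule ccontr)
  assume "\<not> b \<le> snd y"
  then have "b - snd y > 0" by simp
  from dom_lower2[OF yd this] obtain a where a: "a \<in> G" "snd a < snd y + (b - snd y)" by blast
  then show False using low2_lb[OF l a(1)] by simp
qed

lemma int_low2: assumes l: "low2 G b" and z: "z \<in> interior (dom_phi G)" shows "b < snd z"
proof -
  obtain a where a: "a \<in> G" "snd a < snd z" using int_D[OF z] unfolding around_iff by blast
  then show ?thesis using low2_lb[OF l a(1)] by simp
qed

end

context MM begin

lemma low2_line:
  assumes l: "low2 G b" and le: "lesc G y" and A: "Arg G y = {x}"
  shows "snd y = b"
proof (rule ccontr)
  assume ne: "snd y \<noteq> b"
  have xA: "x \<in> Arg G y" using A by auto
  have xG: "x \<in> G" and yd: "y \<in> dom_phi G" using Arg_G[OF xA] Arg_dom[OF xA] by auto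
  have "b \<le> snd y" using dom_low2[OF l yd] .
  then have g: "snd y - b > 0" using ne by simp
  define \<gamma> where "\<gamma> = snd y - b"
  have g0: "\<gamma> > 0" using g unfolding \<gamma>_def .
  have nf: "\<not> bdd_below (fst ` G)" using low2_fst_unb[OF l] .
  define T where "T = 1 + 3 * (\<bar>cst x y\<bar> + 2) / \<gamma>"
  have Tg: "(T - 1) * (\<gamma> / 3) = \<bar>cst x y\<bar> + 2" unfolding T_def using g0 by (simp add: field_simps)
  have T1: "T - 1 > 0" unfolding T_def using g0 by (simp add: field_simps add_pos_nonneg)
  obtain a1 where a1: "a1 \<in> G" "snd a1 < b + \<gamma> / 3" using low2_approx[OF l, of "\<gamma>/3"] g0 by auto
  obtain a2 where a2: "a2 \<in> G" "fst a2 < fst y - T" using not_bdd_below_ex[OF nf, of "fst y - T"] by auto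
  obtain z where z: "z \<in> G" "fst z \<le> fst a1" "snd z \<le> snd a1" "fst z \<le> fst a2" "snd z \<le> snd a2"
    using chain_min[OF a1(1) a2(1)] by blast
  obtain \<delta> where dl: "\<delta> > 0" "\<delta> \<le> 1" "\<forall>w. dist w y < \<delta> \<longrightarrow> \<bar>cst x w - cst x y\<bar> < 1"
    using cst_cont[of 1 y x] by auto
  define \<delta>' where "\<delta>' = min \<delta> (\<gamma> / 3)"
  have d': "\<delta>' > 0" unfolding \<delta>'_def using dl g0 by simp
  obtain w xw where w: "w \<in> interior (dom_phi G)" "dist w y < \<delta>'" and xw: "xw \<in> Arg G w" "fst xw + snd xw < - (- (fst z + snd z))"
    using le d' unfolding lesc_def by blast
  have xwz: "fst xw \<le> fst z \<and> snd xw \<le> snd z" using chain[OF Arg_G[OF xw(1)] z(1)] xw(2) by auto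
  have w1: "\<bar>fst w - fst y\<bar> < 1" "\<bar>snd w - snd y\<bar> < \<gamma> / 3"
    using abs_fst_le[of w y] abs_snd_le[of w y] w(2) dl(2) unfolding \<delta>'_def by auto
  have p1: "fst w - fst xw \<ge> T - 1" using xwz z a2 w1(1) unfolding abs_less_iff by (elim conjE) linarith
  have p2: "snd w - snd xw \<ge> \<gamma> / 3" using xwz z a1 w1(2) unfolding abs_less_iff \<gamma>_def by (elim conjE) (simp add: field_simps)
  have "(T - 1) * (\<gamma> / 3) \<le> (fst w - fst xw) * (snd w - snd xw)"
    using p1 p2 T1 g0 by (intro mult_mono) auto
  moreover have "cst xw w = (fst w - fst xw) * (snd w - snd xw)" unfolding cst_def by (simp add: algebra_simps)
  moreover have "cst xw w \<le> cst x w" using Arg_min[OF xw(1) xG] .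
  moreover have "cst x w < cst x y + 1" using dl(3) w(2) unfolding \<delta>'_def by fastforce
  moreover have "cst x y \<le> \<bar>cst x y\<bar>" by simp
  ultimately show False using Tg by linarith
qed

lemma low2_one:
  assumes l: "low2 G b" and A: "Arg G y = {x}" and sy: "snd y = b" and sy': "snd y' = b"
    and lt: "fst y < fst y'" and le': "lesc G y'"
  shows False
proof -
  have xA: "x \<in> Arg G y" using A by auto
  have xG: "x \<in> G" and yd: "y \<in> dom_phi G" and px: "phir G y = cst x y"
    using Arg_G[OF xA] Arg_dom[OF xA] Arg_phir[OF xA] by auto
  have nf: "\<not> bdd_below (fst ` G)" using low2_fst_unb[OF l] .
  have x2: "snd x > b"
  proof (rule ccontr)
    assume "\<not> snd x > b"
    then have sx: "snd x = b" using low2_lb[OF l xG] by simp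
    obtain z where z: "z \<in> G" "fst z < fst x" using not_bdd_below_ex[OF nf, of "fst x"] by auto
    have "snd z \<le> snd x" using chain[OF z(1) xG] z(2) by auto
    then have sz: "snd z = b" using low2_lb[OF l z(1)] sx by simp
    have "cst z y = 0" "cst x y = 0" unfolding cst_def using sz sx sy by auto
    then have "z \<in> Arg G y" using Arg_iff z(1) yd px by simp
    then show False using A z(2) by auto
  qed
  define Q where "Q = fst y' - fst y"
  have Q0: "Q > 0" unfolding Q_def using lt by simp
  define gap where "gap = Q * (snd x - b)"
  have gap0: "gap > 0" unfolding gap_def using Q0 x2 by simp
  have cxy': "cst x y' = cst x y - gap" unfolding cst_def gap_def Q_def using sy sy' by (simp add: algebra_simps)
  obtain \<delta>1 where d1: "\<delta>1 > 0" "\<delta>1 \<le> 1" "\<forall>w. dist w y' < \<delta>1 \<longrightarrow> \<bar>cst x w - cst x y'\<bar> < gap / 3"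
    using cst_cont[of "gap/3" y' x] gap0 by auto
  define \<tau> where "\<tau> = min \<delta>1 (gap / (3 * (Q + 1)))"
  have tau: "\<tau> > 0" "\<tau> \<le> 1" "(Q + 1) * \<tau> \<le> gap / 3"
  proof -
    show "\<tau> > 0" unfolding \<tau>_def using d1 gap0 Q0 by simp
    show "\<tau> \<le> 1" unfolding \<tau>_def using d1 by simp
    have "\<tau> \<le> gap / (3 * (Q + 1))" unfolding \<tau>_def by simp
    then have "(Q + 1) * \<tau> \<le> (Q + 1) * (gap / (3 * (Q + 1)))" using Q0 by (intro mult_left_mono) auto
    also have "\<dots> = gap / 3" using Q0 by (simp add: field_simps)
    finally show "(Q + 1) * \<tau> \<le> gap / 3" .
  qed
  obtain a1 where a1: "a1 \<in> G" "snd a1 < b + \<tau>" using low2_approx[OF l tau(1)] by auto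
  obtain a2 where a2: "a2 \<in> G" "fst a2 < fst y - 2" using not_bdd_below_ex[OF nf, of "fst y - 2"] by auto
  obtain z where z: "z \<in> G" "fst z \<le> fst a1" "snd z \<le> snd a1" "fst z \<le> fst a2" "snd z \<le> snd a2"
    using chain_min[OF a1(1) a2(1)] by blast
  obtain w xw where w: "w \<in> interior (dom_phi G)" "dist w y' < \<tau>" and xw: "xw \<in> Arg G w" "fst xw + snd xw < - (- (fst z + snd z))"
    using le' tau(1) unfolding lesc_def by blast
  have xwG: "xw \<in> G" using Arg_G[OF xw(1)] .
  have xwz: "fst xw \<le> fst z \<and> snd xw \<le> snd z" using chain[OF xwG z(1)] xw(2) by auto
  have w1: "\<bar>fst w - fst y'\<bar> < \<tau>" using abs_fst_le[of w y'] w(2) by simp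
  have f1: "fst xw - fst w \<le> 0" using xwz z a2 w1 tau(2) lt unfolding abs_less_iff by (elim conjE) linarith
  have sw: "b < snd w" using int_low2[OF l w(1)] .
  have s1: "b \<le> snd xw" using low2_lb[OF l xwG] .
  have s2: "snd xw - b < \<tau>" using xwz z a1 by linarith
  have c1: "(fst xw - fst w) * (snd xw - b) \<le> cst xw w"
    unfolding cst_def using mult_left_mono_neg[of "snd xw - snd w" "snd xw - b" "fst xw - fst w"] f1 sw by simp
  have c2: "cst xw y = (fst xw - fst w) * (snd xw - b) + (fst w - fst y) * (snd xw - b)"
    unfolding cst_def using sy by (simp add: algebra_simps)
  have "\<bar>fst w - fst y\<bar> \<le> Q + 1" using w1 tau(2) Q0 unfolding Q_def abs_less_iff abs_le_iff by (elim conjE) (intro conjI; linarith)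
  then have "\<bar>(fst w - fst y) * (snd xw - b)\<bar> \<le> (Q + 1) * \<tau>"
    unfolding abs_mult using s1 s2 by (intro mult_mono) auto
  then have c3: "(fst w - fst y) * (snd xw - b) \<le> gap / 3" using tau(3) by simp
  have "cst xw w \<le> cst x w" using Arg_min[OF xw(1) xG] .
  moreover have "cst x w < cst x y' + gap / 3"
  proof -
    have "dist w y' < \<delta>1" using w(2) unfolding \<tau>_def by simp
    then have "\<bar>cst x w - cst x y'\<bar> < gap / 3" using d1(3) by blast
    then show ?thesis unfolding abs_less_iff by (elim conjE) (simp add: field_simps)
  qed
  moreover have "cst x y \<le> cst xw y" using phir_le[OF yd xwG] px by simp
  ultimately have "gap \<le> gap / 3 + gap / 3" using c1 c2 c3 cxy' by linarith
  then show False using gap0 by simp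
qed

lemma low2_part:
  assumes nd: "interior (dom_phi G) \<noteq> {}" and l: "low2 G b" and yd: "y \<in> dom_phi G" and sy: "snd y = b"
  shows "infinite ({p. snd p = b} \<inter> rel_frontier (dom_phi G))"
proof -
  define f where "f n = (fst y - real n, b)" for n :: nat
  have inj: "inj f" unfolding f_def by (rule injI) simp
  have "f n \<in> {p. snd p = b} \<inter> rel_frontier (dom_phi G)" for n
  proof -
    have "\<forall>x\<in>G. phir G y \<le> cst x (f n)"
    proof
      fix x assume x: "x \<in> G"
      have "0 \<le> snd x - b" using low2_lb[OF l x] by simp
      then have "(fst x - fst y) * (snd x - b) \<le> (fst x - fst y + real n) * (snd x - b)"
        by (intro mult_right_mono) auto
      then have "cst x y \<le> cst x (f n)" unfolding cst_def f_def using sy by (simp add: algebra_simps)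
      then show "phir G y \<le> cst x (f n)" using phir_le[OF yd x] by linarith
    qed
    then have fd: "f n \<in> dom_phi G" using dom_I(1) by blast
    have "f n \<notin> interior (dom_phi G)" using int_low2[OF l] unfolding f_def by fastforce
    then show ?thesis using fd rel_frontier_nd[OF nd] closure_subset unfolding f_def by auto
  qed
  then have "range f \<subseteq> {p. snd p = b} \<inter> rel_frontier (dom_phi G)" by blast
  moreover have "infinite (range f)" using range_inj_infinite[OF inj] .
  ultimately show ?thesis using infinite_super by blast
qed

end

definition isoT :: "(pt \<Rightarrow> pt) \<Rightarrow> bool" where
  "isoT T \<longleftrightarrow> linear T \<and> (\<forall>x. T (T x) = x) \<and> (\<forall>x y. cst (T x) (T y) = cst x y) \<and> (\<forall>x y. dist (T x) (T y) = dist x y)"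

definition swp :: "pt \<Rightarrow> pt" where "swp x = (snd x, fst x)"

lemma isoT_swp: "isoT swp"
  unfolding isoT_def
proof (intro conjI allI)
  show "linear swp" by (rule linearI) (auto simp: swp_def)
  fix x y :: pt
  show "swp (swp x) = x" by (simp add: swp_def)
  show "cst (swp x) (swp y) = cst x y" by (simp add: swp_def cst_def)
  show "dist (swp x) (swp y) = dist x y" by (cases x; cases y) (simp add: swp_def dist_Pair_Pair add.commute)
qed

lemma isoT_neg: "isoT (uminus :: pt \<Rightarrow> pt)"
  unfolding isoT_def
proof (intro conjI allI)
  show "linear (uminus :: pt \<Rightarrow> pt)" by (rule linear_uminus)
  fix x y :: pt
  show "- (- x) = x" by simp
  show "cst (- x) (- y) = cst x y" by (simp add: cst_def algebra_simps)
  show "dist (- x) (- y) = dist x y" by (simp add: dist_norm norm_minus_commute)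
qed

lemma isoT_invol: "isoT T \<Longrightarrow> T (T x) = x" unfolding isoT_def by blast
lemma isoT_inj: "isoT T \<Longrightarrow> inj T" by (metis injI isoT_invol)
lemma isoT_img2: "isoT T \<Longrightarrow> T ` T ` S = S"
  by (auto simp: image_iff isoT_invol)
lemma isoT_cst: "isoT T \<Longrightarrow> cst (T x) (T y) = cst x y" unfolding isoT_def by blast
lemma isoT_dist: "isoT T \<Longrightarrow> dist (T x) (T y) = dist x y" unfolding isoT_def by blast
lemma isoT_linear: "isoT T \<Longrightarrow> linear T" unfolding isoT_def by blast
lemma isoT_mem: "isoT T \<Longrightarrow> T x \<in> T ` S \<longleftrightarrow> x \<in> S"
  using isoT_inj by (metis inj_image_mem_iff)

lemma mono_T: assumes "isoT T" "monotone_set H" shows "monotone_set (T ` H)"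
  using assms unfolding monotone_set_def by (auto simp: isoT_cst)

lemma mm_T: assumes T: "isoT T" and mm: "maximal_monotone G" shows "maximal_monotone (T ` G)"
  unfolding maximal_monotone_def
proof (intro conjI allI impI)
  show "monotone_set (T ` G)" using mono_T[OF T] mm unfolding maximal_monotone_def by blast
  fix H assume H: "monotone_set H \<and> T ` G \<subseteq> H"
  have "monotone_set (T ` H)" using mono_T[OF T] H by blast
  moreover have "G \<subseteq> T ` H" using H isoT_img2[OF T, of G] by blast
  ultimately have "T ` H = G" using mm unfolding maximal_monotone_def by blast
  then show "H = T ` G" using isoT_img2[OF T, of H] by simp
qed

lemma phi_T: assumes T: "isoT T" shows "phi (T ` G) (T y) = phi G y"
  unfolding phi_def image_image using isoT_cst[OF T] by simp

lemma dom_T: assumes T: "isoT T" shows "dom_phi (T ` G) = T ` dom_phi G"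
proof (intro set_eqI iffI)
  fix z assume "z \<in> dom_phi (T ` G)"
  then have "- \<infinity> < phi (T ` G) (T (T z))" unfolding dom_phi_def using isoT_invol[OF T] by simp
  then have "T z \<in> dom_phi G" unfolding dom_phi_def phi_T[OF T] by simp
  then show "z \<in> T ` dom_phi G" using isoT_invol[OF T, of z] by (metis image_eqI)
next
  fix z assume "z \<in> T ` dom_phi G"
  then obtain u where "u \<in> dom_phi G" "z = T u" by blast
  then show "z \<in> dom_phi (T ` G)" unfolding dom_phi_def using phi_T[OF T] by simp
qed

lemma Arg_T: assumes T: "isoT T" shows "Arg (T ` G) (T y) = T ` Arg G y"
proof (intro set_eqI iffI)
  fix x assume "x \<in> Arg (T ` G) (T y)"
  then have x: "x \<in> T ` G" "phi G y = ereal (cst x (T y))" unfolding Arg_def phi_T[OF T] by auto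
  have "T x \<in> G" using x(1) isoT_mem[OF T, of "T x" G] isoT_invol[OF T] by simp
  moreover have "cst x (T y) = cst (T x) y" using isoT_cst[OF T, of "T x" y] isoT_invol[OF T] by simp
  ultimately have "T x \<in> Arg G y" unfolding Arg_def using x(2) by simp
  then show "x \<in> T ` Arg G y" using isoT_invol[OF T, of x] by (metis image_eqI)
next
  fix x assume "x \<in> T ` Arg G y"
  then obtain u where u: "u \<in> Arg G y" "x = T u" by blast
  then show "x \<in> Arg (T ` G) (T y)" unfolding Arg_def phi_T[OF T] using isoT_cst[OF T] by auto
qed

lemma int_T: assumes T: "isoT T" shows "interior (T ` S) = T ` interior S"
  using interior_injective_linear_image[OF isoT_linear[OF T] isoT_inj[OF T]] .

lemma relfr_T: assumes T: "isoT T" shows "rel_frontier (T ` S) = T ` rel_frontier S"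
proof -
  have bl: "bounded_linear T" using isoT_linear[OF T] linear_conv_bounded_linear by blast
  have "rel_frontier (T ` S) = closure (T ` S) - rel_interior (T ` S)" unfolding rel_frontier_def ..
  also have "\<dots> = T ` closure S - T ` rel_interior S"
    using closure_injective_linear_image[OF isoT_linear[OF T] isoT_inj[OF T]]
      rel_interior_injective_linear_image[OF bl isoT_inj[OF T]] by simp
  also have "\<dots> = T ` rel_frontier S" unfolding rel_frontier_def using image_set_diff[OF isoT_inj[OF T]] by simp
  finally show ?thesis .
qed

lemma sing_T: assumes T: "isoT T" shows "(Arg (T ` G) (T y) = {T x}) \<longleftrightarrow> (Arg G y = {x})"
proof -
  have "(T ` Arg G y = {T x}) \<longleftrightarrow> (Arg G y = {x})"
    using isoT_img2[OF T, of "Arg G y"] isoT_img2[OF T, of "{x}"] by (metis image_empty image_insert)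
  then show ?thesis using Arg_T[OF T] by simp
qed

lemma esc_T: assumes T: "isoT T" and s: "\<forall>x. P (T x) \<longleftrightarrow> Q x"
  shows "(\<exists>w\<in>interior (dom_phi (T ` G)). dist w (T y) < \<delta> \<and> (\<exists>x\<in>Arg (T ` G) w. P x))
      \<longleftrightarrow> (\<exists>w\<in>interior (dom_phi G). dist w y < \<delta> \<and> (\<exists>x\<in>Arg G w. Q x))"
proof
  assume "\<exists>w\<in>interior (dom_phi (T ` G)). dist w (T y) < \<delta> \<and> (\<exists>x\<in>Arg (T ` G) w. P x)"
  then obtain w x where w: "w \<in> interior (dom_phi (T ` G))" "dist w (T y) < \<delta>" and x: "x \<in> Arg (T ` G) w" "P x" by blast
  obtain w0 where w0: "w0 \<in> interior (dom_phi G)" "w = T w0" using w(1) unfolding dom_T[OF T] int_T[OF T] by blast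
  have "x \<in> T ` Arg G w0" using x(1) Arg_T[OF T] w0(2) by simp
  then obtain x0 where x0: "x0 \<in> Arg G w0" "x = T x0" by blast
  have "dist w0 y < \<delta>" using w(2) w0(2) isoT_dist[OF T] by simp
  moreover have "Q x0" using x(2) x0(2) s by blast
  ultimately show "\<exists>w\<in>interior (dom_phi G). dist w y < \<delta> \<and> (\<exists>x\<in>Arg G w. Q x)" using w0(1) x0(1) by blast
next
  assume "\<exists>w\<in>interior (dom_phi G). dist w y < \<delta> \<and> (\<exists>x\<in>Arg G w. Q x)"
  then obtain w0 x0 where w0: "w0 \<in> interior (dom_phi G)" "dist w0 y < \<delta>" and x0: "x0 \<in> Arg G w0" "Q x0" by blast
  have "T w0 \<in> interior (dom_phi (T ` G))" unfolding dom_T[OF T] int_T[OF T] using w0(1) by blast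
  moreover have "dist (T w0) (T y) < \<delta>" using w0(2) isoT_dist[OF T] by simp
  moreover have "T x0 \<in> Arg (T ` G) (T w0)" using Arg_T[OF T] x0(1) by simp
  moreover have "P (T x0)" using s x0(2) by blast
  ultimately show "\<exists>w\<in>interior (dom_phi (T ` G)). dist w (T y) < \<delta> \<and> (\<exists>x\<in>Arg (T ` G) w. P x)" by blast
qed

lemma lesc_T: assumes T: "isoT T" and s: "\<forall>x. fst (T x) + snd (T x) = fst x + snd x"
  shows "lesc (T ` G) (T y) \<longleftrightarrow> lesc G y"
proof -
  have e: "(\<exists>w\<in>interior (dom_phi (T ` G)). dist w (T y) < \<delta> \<and> (\<exists>x\<in>Arg (T ` G) w. fst x + snd x < - K))
      \<longleftrightarrow> (\<exists>w\<in>interior (dom_phi G). dist w y < \<delta> \<and> (\<exists>x\<in>Arg G w. fst x + snd x < - K))" for K \<delta>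
    by (rule esc_T[OF T]) (use s in simp)
  show ?thesis unfolding lesc_def using e by simp
qed

lemma lesc_neg: "lesc (uminus ` G) (- y) \<longleftrightarrow> uesc G y"
proof -
  have e: "(\<exists>w\<in>interior (dom_phi (uminus ` G)). dist w (- y) < \<delta> \<and> (\<exists>x\<in>Arg (uminus ` G) w. fst x + snd x < - K))
      \<longleftrightarrow> (\<exists>w\<in>interior (dom_phi G). dist w y < \<delta> \<and> (\<exists>x\<in>Arg G w. K < fst x + snd x))" for K \<delta>
    by (rule esc_T[OF isoT_neg]) auto
  show ?thesis unfolding lesc_def uesc_def using e by simp
qed


definition lowline :: "pt set \<Rightarrow> pt set" where
  "lowline G = {p. low2 G (snd p)} \<union> {p. low2 (swp ` G) (fst p)}"
definition upline :: "pt set \<Rightarrow> pt set" where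
  "upline G = {p. low2 (uminus ` G) (- snd p)} \<union> {p. low2 (swp ` uminus ` G) (- fst p)}"

lemma subsing_finite: assumes "\<forall>a\<in>S. \<forall>b\<in>S. a = b" shows "finite S" "card S \<le> 1"
proof -
  have "finite S \<and> card S \<le> 1"
  proof (cases "S = {}")
    case True then show ?thesis by simp
  next
    case False
    then obtain a where a: "a \<in> S" by blast
    then have "S \<subseteq> {a}" using assms by blast
    then show ?thesis using card_mono[of "{a}" S] finite_subset by auto
  qed
  then show "finite S" "card S \<le> 1" by auto
qed

lemma snd_swp_img: "snd ` swp ` G = fst ` G"
  unfolding swp_def image_image by simp

lemma sum_swp: "\<forall>x. fst (swp x) + snd (swp x) = fst x + snd x"
  unfolding swp_def by simp

context MM begin

lemma MM_T: "isoT T \<Longrightarrow> MM (T ` G)"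
  using mm_T[OF _ mm] unfolding MM_def by blast

lemma nd_T: assumes T: "isoT T" and nd: "interior (dom_phi G) \<noteq> {}" shows "interior (dom_phi (T ` G)) \<noteq> {}"
  unfolding dom_T[OF T] int_T[OF T] using nd by blast

lemma low_snd:
  assumes nd: "interior (dom_phi G) \<noteq> {}" and bb: "bdd_below (snd ` G)"
    and le: "lesc G y" and A: "Arg G y = {x}"
  shows "low2 G (snd y) \<and> infinite ({p. snd p = snd y} \<inter> rel_frontier (dom_phi G))"
proof -
  have l: "low2 G (Inf (snd ` G))" using low2_Inf[OF bb] .
  have sy: "snd y = Inf (snd ` G)" using low2_line[OF l le A] .
  have yd: "y \<in> dom_phi G" using A Arg_dom by blast
  show ?thesis using l sy low2_part[OF nd l yd sy] by simp
qed

lemma low_fst: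
  assumes nd: "interior (dom_phi G) \<noteq> {}" and bb: "bdd_below (fst ` G)"
    and le: "lesc G y" and A: "Arg G y = {x}"
  shows "low2 (swp ` G) (fst y) \<and> infinite ({p. fst p = fst y} \<inter> rel_frontier (dom_phi G))"
proof -
  have T: "isoT swp" by (rule isoT_swp)
  interpret G': MM "swp ` G" by (rule MM_T[OF T])
  have bb': "bdd_below (snd ` swp ` G)" using bb snd_swp_img by simp
  have le': "lesc (swp ` G) (swp y)" using lesc_T[OF T sum_swp] le by simp
  have A': "Arg (swp ` G) (swp y) = {swp x}" using sing_T[OF T] A by simp
  have r: "low2 (swp ` G) (snd (swp y)) \<and> infinite ({p. snd p = snd (swp y)} \<inter> rel_frontier (dom_phi (swp ` G)))"
    using G'.low_snd[OF nd_T[OF T nd] bb' le' A'] .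
  have "{p. snd p = fst y} \<inter> rel_frontier (dom_phi (swp ` G)) = swp ` ({p. fst p = fst y} \<inter> rel_frontier (dom_phi G))"
    unfolding dom_T[OF T] relfr_T[OF T] by (auto simp: swp_def image_iff)
  then have "infinite (swp ` ({p. fst p = fst y} \<inter> rel_frontier (dom_phi G)))" using r unfolding swp_def by simp
  then have "infinite ({p. fst p = fst y} \<inter> rel_frontier (dom_phi G))" using finite_imageI by blast
  then show ?thesis using r unfolding swp_def by simp
qed

lemma R1:
  assumes nd: "interior (dom_phi G) \<noteq> {}" and yf: "y \<in> rel_frontier (dom_phi G)"
    and le: "lesc G y" and A: "Arg G y = {x}"
  shows "\<exists>P\<in>linear_parts G. y \<in> P \<and> P \<subseteq> lowline G"
proof -
  from L0[OF le A] show ?thesis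
  proof
    assume bb: "bdd_below (fst ` G)"
    define P where "P = {p. fst p = fst y} \<inter> rel_frontier (dom_phi G)"
    have r: "low2 (swp ` G) (fst y)" "infinite P" using low_fst[OF nd bb le A] unfolding P_def by auto
    have "P \<in> linear_parts G" unfolding linear_parts_def P_def using r(2) unfolding P_def by blast
    moreover have "y \<in> P" unfolding P_def using yf by simp
    moreover have "P \<subseteq> lowline G" unfolding lowline_def P_def using r(1) by auto
    ultimately show ?thesis by blast
  next
    assume bb: "bdd_below (snd ` G)"
    define P where "P = {p. snd p = snd y} \<inter> rel_frontier (dom_phi G)"
    have r: "low2 G (snd y)" "infinite P" using low_snd[OF nd bb le A] unfolding P_def by auto
    have "P \<in> linear_parts G" unfolding linear_parts_def P_def using r(2) unfolding P_def by blast
    moreover have "y \<in> P" unfolding P_def using yf by simp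
    moreover have "P \<subseteq> lowline G" unfolding lowline_def P_def using r(1) by auto
    ultimately show ?thesis by blast
  qed
qed

lemma low_unique_snd:
  assumes bb: "bdd_below (snd ` G)" and le: "lesc G y" and A: "Arg G y = {x}"
    and le': "lesc G y'" and A': "Arg G y' = {x'}"
  shows "y = y'"
proof -
  have l: "low2 G (Inf (snd ` G))" using low2_Inf[OF bb] .
  have sy: "snd y = Inf (snd ` G)" using low2_line[OF l le A] .
  have sy': "snd y' = Inf (snd ` G)" using low2_line[OF l le' A'] .
  have "fst y = fst y'"
  proof (rule ccontr)
    assume "fst y \<noteq> fst y'"
    then consider "fst y < fst y'" | "fst y' < fst y" by linarith
    then show False
    proof cases
      case 1 show False using low2_one[OF l A sy sy' 1 le'] by blast
    next
      case 2 show False using low2_one[OF l A' sy' sy 2 le] by blast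
    qed
  qed
  then show ?thesis using sy sy' by (simp add: prod_eq_iff)
qed

lemma R3:
  assumes le: "lesc G y" and A: "Arg G y = {x}" and le': "lesc G y'" and A': "Arg G y' = {x'}"
  shows "y = y'"
proof -
  from L0[OF le A] show ?thesis
  proof
    assume bb: "bdd_below (fst ` G)"
    have T: "isoT swp" by (rule isoT_swp)
    interpret G': MM "swp ` G" by (rule MM_T[OF T])
    have bb': "bdd_below (snd ` swp ` G)" using bb snd_swp_img by simp
    have "swp y = swp y'"
      using G'.low_unique_snd[OF bb', of "swp y" "swp x" "swp y'" "swp x'"]
        lesc_T[OF T sum_swp] sing_T[OF T] le A le' A' by simp
    then show ?thesis using isoT_inj[OF T] by (simp add: inj_eq)
  next
    assume bb: "bdd_below (snd ` G)"
    show ?thesis using low_unique_snd[OF bb le A le' A'] .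
  qed
qed

lemma R2:
  assumes nd: "interior (dom_phi G) \<noteq> {}" and yf: "y \<in> rel_frontier (dom_phi G)"
    and ue: "uesc G y" and A: "Arg G y = {x}"
  shows "\<exists>Q\<in>linear_parts G. y \<in> Q \<and> Q \<subseteq> upline G"
proof -
  have T: "isoT (uminus :: pt \<Rightarrow> pt)" by (rule isoT_neg)
  interpret G'': MM "uminus ` G" by (rule MM_T[OF T])
  have le: "lesc (uminus ` G) (- y)" using lesc_neg ue by simp
  have A'': "Arg (uminus ` G) (- y) = {- x}" using sing_T[OF T] A by simp
  have fr: "rel_frontier (dom_phi (uminus ` G)) = uminus ` rel_frontier (dom_phi G)"
    unfolding dom_T[OF T] relfr_T[OF T] ..
  have yf'': "- y \<in> rel_frontier (dom_phi (uminus ` G))" unfolding fr using yf by simp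
  obtain P where P: "P \<in> linear_parts (uminus ` G)" "- y \<in> P" "P \<subseteq> lowline (uminus ` G)"
    using G''.R1[OF nd_T[OF T nd] yf'' le A''] by blast
  define Q where "Q = uminus ` P"
  obtain t where t: "P = {p. snd p = t} \<inter> rel_frontier (dom_phi (uminus ` G)) \<or> P = {p. fst p = t} \<inter> rel_frontier (dom_phi (uminus ` G))"
    "infinite P" using P(1) unfolding linear_parts_def by blast
  have iQ: "infinite Q" unfolding Q_def using t(2) finite_imageD[of uminus P] by (metis inj_onI neg_equal_iff_equal)
  have "Q = {p. snd p = - t} \<inter> rel_frontier (dom_phi G) \<or> Q = {p. fst p = - t} \<inter> rel_frontier (dom_phi G)"
  proof -
    have e1: "uminus ` ({p. snd p = t} \<inter> uminus ` F) = {p. snd p = - t} \<inter> F" for F :: "pt set"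
    proof (intro set_eqI iffI)
      fix p :: pt assume "p \<in> uminus ` ({p. snd p = t} \<inter> uminus ` F)"
      then obtain u where u: "snd u = t" "u \<in> uminus ` F" "p = - u" by blast
      then show "p \<in> {p. snd p = - t} \<inter> F" by auto
    next
      fix p :: pt assume p: "p \<in> {p. snd p = - t} \<inter> F"
      then have "- p \<in> {p. snd p = t} \<inter> uminus ` F" by auto
      then show "p \<in> uminus ` ({p. snd p = t} \<inter> uminus ` F)" by (metis add.inverse_inverse image_eqI)
    qed
    have e2: "uminus ` ({p. fst p = t} \<inter> uminus ` F) = {p. fst p = - t} \<inter> F" for F :: "pt set"
    proof (intro set_eqI iffI)
      fix p :: pt assume "p \<in> uminus ` ({p. fst p = t} \<inter> uminus ` F)"
      then obtain u where u: "fst u = t" "u \<in> uminus ` F" "p = - u" by blast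
      then show "p \<in> {p. fst p = - t} \<inter> F" by auto
    next
      fix p :: pt assume p: "p \<in> {p. fst p = - t} \<inter> F"
      then have "- p \<in> {p. fst p = t} \<inter> uminus ` F" by auto
      then show "p \<in> uminus ` ({p. fst p = t} \<inter> uminus ` F)" by (metis add.inverse_inverse image_eqI)
    qed
    from t(1) show ?thesis
    proof
      assume "P = {p. snd p = t} \<inter> rel_frontier (dom_phi (uminus ` G))"
      then have "Q = uminus ` ({p. snd p = t} \<inter> uminus ` rel_frontier (dom_phi G))" unfolding Q_def fr by simp
      then show ?thesis using e1 by simp
    next
      assume "P = {p. fst p = t} \<inter> rel_frontier (dom_phi (uminus ` G))"
      then have "Q = uminus ` ({p. fst p = t} \<inter> uminus ` rel_frontier (dom_phi G))" unfolding Q_def fr by simp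
      then show ?thesis using e2 by simp
    qed
  qed
  then have "Q \<in> linear_parts G" unfolding linear_parts_def using iQ by blast
  moreover have "y \<in> Q" unfolding Q_def using P(2) by (metis add.inverse_inverse image_eqI)
  moreover have "Q \<subseteq> upline G"
  proof
    fix p assume "p \<in> Q"
    then have "- p \<in> lowline (uminus ` G)" unfolding Q_def using P(3) by auto
    then show "p \<in> upline G" unfolding lowline_def upline_def by simp
  qed
  ultimately show ?thesis by blast
qed

lemma R4:
  assumes ue: "uesc G y" and A: "Arg G y = {x}" and ue': "uesc G y'" and A': "Arg G y' = {x'}"
  shows "y = y'"
proof -
  have T: "isoT (uminus :: pt \<Rightarrow> pt)" by (rule isoT_neg)
  interpret G'': MM "uminus ` G" by (rule MM_T[OF T])
  have "- y = - y'"
    using G''.R3[of "- y" "- x" "- y'" "- x'"] lesc_neg sing_T[OF T] ue A ue' A' by simp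
  then show ?thesis by simp
qed

lemma R5:
  assumes nd: "interior (dom_phi G) \<noteq> {}" and P: "P \<subseteq> lowline G" and Q: "Q \<subseteq> upline G" and iP: "infinite P"
  shows "P \<noteq> Q"
proof
  assume PQ: "P = Q"
  obtain z where z: "z \<in> interior (dom_phi G)" using nd by blast
  have Tn: "isoT (uminus :: pt \<Rightarrow> pt)" by (rule isoT_neg)
  have Ts: "isoT swp" by (rule isoT_swp)
  interpret Gn: MM "uminus ` G" by (rule MM_T[OF Tn])
  interpret Gs: MM "swp ` G" by (rule MM_T[OF Ts])
  interpret Gsn: MM "swp ` uminus ` G" by (rule Gn.MM_T[OF Ts])
  have zn: "- z \<in> interior (dom_phi (uminus ` G))" unfolding dom_T[OF Tn] int_T[OF Tn] using z by simp
  have zs: "swp z \<in> interior (dom_phi (swp ` G))" unfolding dom_T[OF Ts] int_T[OF Ts] using z by simp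
  have zsn: "swp (- z) \<in> interior (dom_phi (swp ` uminus ` G))" unfolding dom_T[OF Ts] int_T[OF Ts] using zn by simp
  have S1: "\<not> (low2 G b \<and> low2 (uminus ` G) (- b))" for b
  proof
    assume h: "low2 G b \<and> low2 (uminus ` G) (- b)"
    have "b < snd z" using int_low2[OF _ z] h by blast
    moreover have "- b < snd (- z)" using Gn.int_low2[OF _ zn] h by blast
    ultimately show False by simp
  qed
  have S2: "\<not> (low2 (swp ` G) a \<and> low2 (swp ` uminus ` G) (- a))" for a
  proof
    assume h: "low2 (swp ` G) a \<and> low2 (swp ` uminus ` G) (- a)"
    have "a < snd (swp z)" using Gs.int_low2[OF _ zs] h by blast
    moreover have "- a < snd (swp (- z))" using Gsn.int_low2[OF _ zsn] h by blast
    ultimately show False by (simp add: swp_def)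
  qed
  define S3 where "S3 = {p. low2 G (snd p) \<and> low2 (swp ` uminus ` G) (- fst p)}"
  define S4 where "S4 = {p. low2 (swp ` G) (fst p) \<and> low2 (uminus ` G) (- snd p)}"
  have s3: "\<forall>a\<in>S3. \<forall>b\<in>S3. a = b"
  proof (intro ballI)
    fix p q assume "p \<in> S3" "q \<in> S3"
    then have "snd p = snd q" "- fst p = - fst q" unfolding S3_def using low2_unique Gsn.low2_unique by blast+
    then show "p = q" by (simp add: prod_eq_iff)
  qed
  have s4: "\<forall>a\<in>S4. \<forall>b\<in>S4. a = b"
  proof (intro ballI)
    fix p q assume "p \<in> S4" "q \<in> S4"
    then have "fst p = fst q" "- snd p = - snd q" unfolding S4_def using Gs.low2_unique Gn.low2_unique by blast+
    then show "p = q" by (simp add: prod_eq_iff)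
  qed
  have "lowline G \<inter> upline G \<subseteq> S3 \<union> S4"
  proof
    fix p assume "p \<in> lowline G \<inter> upline G"
    then have a: "low2 G (snd p) \<or> low2 (swp ` G) (fst p)"
      and b: "low2 (uminus ` G) (- snd p) \<or> low2 (swp ` uminus ` G) (- fst p)"
      unfolding lowline_def upline_def by auto
    show "p \<in> S3 \<union> S4" using a b S1[of "snd p"] S2[of "fst p"] unfolding S3_def S4_def by blast
  qed
  then have "finite (lowline G \<inter> upline G)"
    using subsing_finite(1)[OF s3] subsing_finite(1)[OF s4] finite_subset by blast
  moreover have "P \<subseteq> lowline G \<inter> upline G" using P Q PQ by blast
  ultimately show False using iP finite_subset by blast
qed

end

context MM begin

lemma T2: "rel_frontier (dom_phi G) \<inter> G = rel_frontier (dom_phi G) \<inter> E_set G"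
proof
  show "rel_frontier (dom_phi G) \<inter> G \<subseteq> rel_frontier (dom_phi G) \<inter> E_set G"
  proof
    fix y assume y: "y \<in> rel_frontier (dom_phi G) \<inter> G"
    show "y \<in> rel_frontier (dom_phi G) \<inter> E_set G"
    proof (cases "interior (dom_phi G) = {}")
      case True then show ?thesis using y degenerate(1)[OF True] by blast
    next
      case False
      then have "y \<notin> interior (dom_phi G)" using y rel_frontier_nd by blast
      then show ?thesis using y G_E by blast
    qed
  qed
  show "rel_frontier (dom_phi G) \<inter> E_set G \<subseteq> rel_frontier (dom_phi G) \<inter> G"
    unfolding E_set_def E_i_def by blast
qed

lemma T345:
  shows "finite (udom_Arg G - dom_grad G) \<and> card (udom_Arg G - dom_grad G) \<le> 2
    \<and> (\<forall>y \<in> udom_Arg G - dom_grad G. \<exists>P \<in> linear_parts G. y \<in> P)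
    \<and> (\<forall>y \<in> udom_Arg G - dom_grad G. \<forall>y' \<in> udom_Arg G - dom_grad G. y \<noteq> y' \<longrightarrow>
         (\<exists>P \<in> linear_parts G. \<exists>Q \<in> linear_parts G. P \<noteq> Q \<and> y \<in> P \<and> y' \<in> Q))"
proof (cases "interior (dom_phi G) = {}")
  case True
  have e: "udom_Arg G - dom_grad G = {}" using degenerate(2)[OF True] by blast
  show ?thesis unfolding e by simp
next
  case False
  note nd = False
  define S where "S = udom_Arg G - dom_grad G"
  have SE: "y \<in> rel_frontier (dom_phi G) \<and> (\<exists>x. Arg G y = {x}) \<and> (lesc G y \<or> uesc G y)" if "y \<in> S" for y
    using E1[OF nd] that unfolding S_def by blast
  define Lw where "Lw = {y \<in> S. lesc G y}"
  define Up where "Up = {y \<in> S. uesc G y}"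
  have SLU: "S = Lw \<union> Up" unfolding Lw_def Up_def using SE by blast
  have lw: "\<forall>a\<in>Lw. \<forall>b\<in>Lw. a = b"
  proof (intro ballI)
    fix a b assume ab: "a \<in> Lw" "b \<in> Lw"
    obtain xa where xa: "Arg G a = {xa}" using SE ab(1) unfolding Lw_def by blast
    obtain xb where xb: "Arg G b = {xb}" using SE ab(2) unfolding Lw_def by blast
    show "a = b" using R3[OF _ xa _ xb] ab unfolding Lw_def by blast
  qed
  have up: "\<forall>a\<in>Up. \<forall>b\<in>Up. a = b"
  proof (intro ballI)
    fix a b assume ab: "a \<in> Up" "b \<in> Up"
    obtain xa where xa: "Arg G a = {xa}" using SE ab(1) unfolding Up_def by blast
    obtain xb where xb: "Arg G b = {xb}" using SE ab(2) unfolding Up_def by blast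
    show "a = b" using R4[OF _ xa _ xb] ab unfolding Up_def by blast
  qed
  have fin: "finite S" using SLU subsing_finite(1)[OF lw] subsing_finite(1)[OF up] by simp
  have "card S \<le> card Lw + card Up" unfolding SLU by (rule card_Un_le)
  then have card: "card S \<le> 2" using subsing_finite(2)[OF lw] subsing_finite(2)[OF up] by linarith
  have lowP: "\<exists>P\<in>linear_parts G. y \<in> P \<and> P \<subseteq> lowline G" if yL: "y \<in> Lw" for y
  proof -
    obtain x where x: "Arg G y = {x}" using SE yL unfolding Lw_def by blast
    show ?thesis using R1[OF nd _ _ x] SE yL unfolding Lw_def by blast
  qed
  have upP: "\<exists>P\<in>linear_parts G. y \<in> P \<and> P \<subseteq> upline G" if yL: "y \<in> Up" for y
  proof -
    obtain x where x: "Arg G y = {x}" using SE yL unfolding Up_def by blast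
    show ?thesis using R2[OF nd _ _ x] SE yL unfolding Up_def by blast
  qed
  have c4: "\<forall>y \<in> S. \<exists>P \<in> linear_parts G. y \<in> P"
    using lowP upP SLU by blast
  have c5: "\<forall>y \<in> S. \<forall>y' \<in> S. y \<noteq> y' \<longrightarrow> (\<exists>P \<in> linear_parts G. \<exists>Q \<in> linear_parts G. P \<noteq> Q \<and> y \<in> P \<and> y' \<in> Q)"
  proof (intro ballI impI)
    fix y y' assume yy: "y \<in> S" "y' \<in> S" "y \<noteq> y'"
    have "(y \<in> Lw \<and> y' \<in> Up) \<or> (y \<in> Up \<and> y' \<in> Lw)"
      using yy lw up SLU by blast
    then show "\<exists>P \<in> linear_parts G. \<exists>Q \<in> linear_parts G. P \<noteq> Q \<and> y \<in> P \<and> y' \<in> Q"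
    proof
      assume h: "y \<in> Lw \<and> y' \<in> Up"
      obtain P where P: "P \<in> linear_parts G" "y \<in> P" "P \<subseteq> lowline G" using lowP h by blast
      obtain Q where Q: "Q \<in> linear_parts G" "y' \<in> Q" "Q \<subseteq> upline G" using upP h by blast
      have "infinite P" using P(1) unfolding linear_parts_def by blast
      then have "P \<noteq> Q" using R5[OF nd P(3) Q(3)] by blast
      then show ?thesis using P Q by blast
    next
      assume h: "y \<in> Up \<and> y' \<in> Lw"
      obtain P where P: "P \<in> linear_parts G" "y \<in> P" "P \<subseteq> upline G" using upP h by blast
      obtain Q where Q: "Q \<in> linear_parts G" "y' \<in> Q" "Q \<subseteq> lowline G" using lowP h by blast
      have "infinite Q" using Q(1) unfolding linear_parts_def by blast
      then have "Q \<noteq> P" using R5[OF nd Q(3) P(3)] by blast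
      then show ?thesis using P Q by blast
    qed
  qed
  show ?thesis using fin card c4 c5 unfolding S_def by blast
qed

lemma T6:
  assumes y: "y \<in> dom_grad G \<inter> udom_Arg G"
  shows "Arg G y = {Dc G y} \<and> phi G y = ereal (cst (Dc G y) y) \<and> phi G y = ereal (fst (grad G y) * snd (grad G y))"
proof -
  obtain x where A: "Arg G y = {x}" using y unfolding udom_Arg_def by blast
  have g: "grad G y = gc x y" using T7[OF _ A] y by blast
  have D: "Dc G y = x" unfolding Dc_def g gc_def by simp
  have xA: "x \<in> Arg G y" using A by auto
  have p: "phi G y = ereal (cst x y)" using xA unfolding Arg_def by blast
  have "fst (grad G y) * snd (grad G y) = cst x y" unfolding g gc_def cst_def by (simp add: algebra_simps)
  then show ?thesis using A D p by simp
qed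

end

theorem theorem9:
  fixes G :: "(real \<times> real) set"
  assumes "maximal_monotone G"
  shows "dom_grad G - udom_Arg G \<subseteq> rel_frontier (dom_phi G) \<inter> G
    \<and> rel_frontier (dom_phi G) \<inter> G = rel_frontier (dom_phi G) \<inter> E_set G
    \<and> finite (udom_Arg G - dom_grad G) \<and> card (udom_Arg G - dom_grad G) \<le> 2
    \<and> (\<forall>y \<in> udom_Arg G - dom_grad G. \<exists>P \<in> linear_parts G. y \<in> P)
    \<and> (\<forall>y \<in> udom_Arg G - dom_grad G. \<forall>y' \<in> udom_Arg G - dom_grad G. y \<noteq> y' \<longrightarrow>
         (\<exists>P \<in> linear_parts G. \<exists>Q \<in> linear_parts G. P \<noteq> Q \<and> y \<in> P \<and> y' \<in> Q))
    \<and> (\<forall>y \<in> dom_grad G \<inter> udom_Arg G.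
         Arg G y = {Dc G y}
         \<and> phi G y = ereal (cst (Dc G y) y)
         \<and> phi G y = ereal (fst (grad G y) * snd (grad G y)))"
proof -
  interpret MM G using assms by (rule MM.intro)
  show ?thesis using T1 T2 T345 T6 by blast
qed


end
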